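(* Let $X,X_1,X_2,\dots$ be random variables in a sub-linear expectation space $(\Omega,\mathscr H,\hat{\mathbb E})$ with $\{X_n\}$ independent, $X_n\overset d=X$ for all $n$, and $\hat{\mathbb E}[X]=\hat{\mathcal E}[X]=0$. Let $S_n=\sum_{i=1}^nX_i$, $V_n^2=\sum_{i=1}^nX_i^2$, $l(x)=\hat{\mathbb E}[X^2\wedge x^2]$, and assume: (I) $\mathbb V(|X|\ge x)=o(x^{-2}l(x))$ as $x\to\infty$; (II) $\limsup_{x\to\infty}\hat{\mathbb E}[X^2\wedge x^2]/\hat{\mathcal E}[X^2\wedge x^2]<\infty$; (III) $\hat{\mathbb E}[(|X|-c)^+]\to0$ as $c\to\infty$; (IV) $x_n\to\infty$ and $x_n=o(\sqrt n)$. Let $b_0=\inf\{x\ge0:l(x)>0\}$ and $z_n=\inf\{s\ge b_0+1: l(s)/s^2\le x_n^2/n\}$. Then, as $n\to\infty$, $$\mathbb V\big(S_n\ge x_nV_n,\ V_n^2\ge 9nl(z_n)\big)\le\exp\{-x_n^2+o(x_n^2)\}.$$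
   Context: Sub-linear expectation space: $\mathscr H$ is a linear space of real functions on a measurable space $(\Omega,\mathcal F)$, closed under $\varphi(X_1,\dots,X_n)$ for $\varphi$ bounded continuous or locally Lipschitz with polynomial growth ($|\varphi(x)-\varphi(y)|\le C(1+|x|^m+|y|^m)|x-y|$); $\hat{\mathbb E}:\mathscr H\to[-\infty,\infty]$ is monotone, constant preserving, sub-additive and positively homogeneous. $\hat{\mathcal E}[X]=-\hat{\mathbb E}[-X]$; $\mathbb V(A)=\inf\{\hat{\mathbb E}[\xi]:I_A\le\xi,\xi\in\mathscr H\}$. Independence: $\mathbf Y$ is independent of $\mathbf X$ if $\hat{\mathbb E}[\varphi(\mathbf X,\mathbf Y)]=\hat{\mathbb E}[\hat{\mathbb E}[\varphi(\mathbf x,\mathbf Y)]|_{\mathbf x=\mathbf X}]$ for all such locally Lipschitz $\varphi$ (whenever the relevant expectations are finite); $\{X_n\}$ is independent if $X_{i+1}$ is independent of $(X_1,\dots,X_i)$ for each $i$. $X_n\overset d=X$ means $\hat{\mathbb E}[\varphi(X_n)]=\hat{\mathbb E}[\varphi(X)]$ for all locally Lipschitz $\varphi$ of polynomial growth. $a\wedge b=\min(a,b)$. *)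

theory Defs
  imports "HOL-Analysis.Analysis"
begin

text \<open>Points of R^n are represented as real lists of length n, with the Euclidean norm.\<close>

definition lnorm :: "real list \<Rightarrow> real" where
  "lnorm xs = sqrt (sum_list (map (\<lambda>a. a\<^sup>2) xs))"

definition ldiff :: "real list \<Rightarrow> real list \<Rightarrow> real list" where
  "ldiff xs ys = map2 (-) xs ys"

definition lip_poly :: "nat \<Rightarrow> (real list \<Rightarrow> real) \<Rightarrow> bool" where
  "lip_poly n \<phi> \<longleftrightarrow> (\<exists>C::real. \<exists>m::nat. \<forall>x y. length x = n \<longrightarrow> length y = n \<longrightarrow>
      \<bar>\<phi> x - \<phi> y\<bar> \<le> C * (1 + lnorm x ^ m + lnorm y ^ m) * lnorm (ldiff x y))"

definition bdd_cont :: "nat \<Rightarrow> (real list \<Rightarrow> real) \<Rightarrow> bool" where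
  "bdd_cont n \<phi> \<longleftrightarrow> (\<exists>B. \<forall>x. length x = n \<longrightarrow> \<bar>\<phi> x\<bar> \<le> B) \<and>
     (\<forall>x. length x = n \<longrightarrow> (\<forall>e>0. \<exists>d>0. \<forall>y. length y = n \<longrightarrow> lnorm (ldiff y x) < d \<longrightarrow>
        \<bar>\<phi> y - \<phi> x\<bar> < e))"

definition at_pt :: "('w \<Rightarrow> real) list \<Rightarrow> 'w \<Rightarrow> real list" where
  "at_pt Xs w = map (\<lambda>Z. Z w) Xs"

text \<open>Sub-linear expectation space (H, E) on sample space 'w.
  E takes values in [-\<infinity>,\<infinity>] and is only constrained on H.\<close>
definition sublinear_expectation_space ::
  "('w \<Rightarrow> real) set \<Rightarrow> (('w \<Rightarrow> real) \<Rightarrow> ereal) \<Rightarrow> bool" where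
  "sublinear_expectation_space H E \<longleftrightarrow>
     (\<forall>X\<in>H. \<forall>Y\<in>H. (\<lambda>w. X w + Y w) \<in> H) \<and>
     (\<forall>X\<in>H. \<forall>c::real. (\<lambda>w. c * X w) \<in> H) \<and>
     (\<forall>c::real. (\<lambda>w. c) \<in> H) \<and>
     (\<forall>Xs \<phi>. set Xs \<subseteq> H \<longrightarrow> (bdd_cont (length Xs) \<phi> \<or> lip_poly (length Xs) \<phi>) \<longrightarrow>
        (\<lambda>w. \<phi> (at_pt Xs w)) \<in> H) \<and>
     (\<forall>X\<in>H. \<forall>Y\<in>H. (\<forall>w. X w \<le> Y w) \<longrightarrow> E X \<le> E Y) \<and>
     (\<forall>c::real. E (\<lambda>w. c) = ereal c) \<and>
     (\<forall>X\<in>H. \<forall>Y\<in>H. E (\<lambda>w. X w + Y w) \<le> E X + E Y) \<and>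
     (\<forall>X\<in>H. \<forall>a::real. a \<ge> 0 \<longrightarrow> E (\<lambda>w. a * X w) = ereal a * E X)"

definition lowerE :: "(('w \<Rightarrow> real) \<Rightarrow> ereal) \<Rightarrow> ('w \<Rightarrow> real) \<Rightarrow> ereal" where
  "lowerE E X = - E (\<lambda>w. - X w)"

definition capV :: "('w \<Rightarrow> real) set \<Rightarrow> (('w \<Rightarrow> real) \<Rightarrow> ereal) \<Rightarrow> 'w set \<Rightarrow> ereal" where
  "capV H E A = Inf {E \<xi> | \<xi>. \<xi> \<in> H \<and> (\<forall>w. indicator A w \<le> \<xi> w)}"

definition indep_of :: "('w \<Rightarrow> real) set \<Rightarrow> (('w \<Rightarrow> real) \<Rightarrow> ereal) \<Rightarrow>
    ('w \<Rightarrow> real) \<Rightarrow> ('w \<Rightarrow> real) list \<Rightarrow> bool" where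
  "indep_of H E Y Xs \<longleftrightarrow>
     (\<forall>\<phi>. lip_poly (length Xs + 1) \<phi> \<longrightarrow>
        (\<forall>x. length x = length Xs \<longrightarrow> \<bar>E (\<lambda>w. \<phi> (x @ [Y w]))\<bar> < \<infinity>) \<longrightarrow>
        E (\<lambda>w. \<phi> (at_pt Xs w @ [Y w])) =
          E (\<lambda>w. real_of_ereal (E (\<lambda>w'. \<phi> (at_pt Xs w @ [Y w'])))))"

definition same_distr :: "(('w \<Rightarrow> real) \<Rightarrow> ereal) \<Rightarrow> ('w \<Rightarrow> real) \<Rightarrow> ('w \<Rightarrow> real) \<Rightarrow> bool" where
  "same_distr E Y X \<longleftrightarrow> (\<forall>\<phi>. lip_poly 1 \<phi> \<longrightarrow> E (\<lambda>w. \<phi> [Y w]) = E (\<lambda>w. \<phi> [X w]))"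

end

theory Submission
  imports Defs
begin

lemma sl_add: "sublinear_expectation_space H E \<Longrightarrow> X \<in> H \<Longrightarrow> Y \<in> H \<Longrightarrow> (\<lambda>w. X w + Y w) \<in> H"
  unfolding sublinear_expectation_space_def by blast
lemma sl_smul: "sublinear_expectation_space H E \<Longrightarrow> X \<in> H \<Longrightarrow> (\<lambda>w. c * X w) \<in> H"
  unfolding sublinear_expectation_space_def by blast
lemma sl_const: "sublinear_expectation_space H E \<Longrightarrow> (\<lambda>w. c) \<in> H"
  unfolding sublinear_expectation_space_def by blast
lemma sl_comp: "sublinear_expectation_space H E \<Longrightarrow> set Xs \<subseteq> H \<Longrightarrow> lip_poly (length Xs) \<phi> \<Longrightarrow>
   (\<lambda>w. \<phi> (at_pt Xs w)) \<in> H"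
  unfolding sublinear_expectation_space_def by blast
lemma sl_mono: "sublinear_expectation_space H E \<Longrightarrow> X \<in> H \<Longrightarrow> Y \<in> H \<Longrightarrow> (\<And>w. X w \<le> Y w) \<Longrightarrow> E X \<le> E Y"
  unfolding sublinear_expectation_space_def by blast
lemma sl_constE: "sublinear_expectation_space H E \<Longrightarrow> E (\<lambda>w. c) = ereal c"
  unfolding sublinear_expectation_space_def by blast
lemma sl_subadd: "sublinear_expectation_space H E \<Longrightarrow> X \<in> H \<Longrightarrow> Y \<in> H \<Longrightarrow> E (\<lambda>w. X w + Y w) \<le> E X + E Y"
  unfolding sublinear_expectation_space_def by blast
lemma sl_hom: "sublinear_expectation_space H E \<Longrightarrow> X \<in> H \<Longrightarrow> a \<ge> 0 \<Longrightarrow> E (\<lambda>w. a * X w) = ereal a * E X"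
  unfolding sublinear_expectation_space_def by blast

lemma sl_nonneg: "sum_list (map (\<lambda>a::real. a\<^sup>2) xs) \<ge> 0"
  by (induct xs) auto
lemma lnorm_nonneg: "lnorm xs \<ge> 0" unfolding lnorm_def using sl_nonneg[of xs] by simp

lemma lnorm_single: "lnorm (ldiff [a] [b]) = \<bar>a - b\<bar>"
  unfolding lnorm_def ldiff_def by simp

lemma lnorm_cons: "lnorm (ldiff (a#xs) (b#ys)) = sqrt ((a-b)\<^sup>2 + (lnorm (ldiff xs ys))\<^sup>2)"
proof -
  have "sum_list (map (\<lambda>a. a\<^sup>2) (map2 (-) xs ys)) \<ge> 0" by (rule sl_nonneg)
  then show ?thesis unfolding lnorm_def ldiff_def by (simp add: o_def)
qed

lemma lnorm_cons1: "\<bar>a - b\<bar> \<le> lnorm (ldiff (a#xs) (b#ys))"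
proof -
  have "sqrt ((a-b)\<^sup>2) \<le> sqrt ((a-b)\<^sup>2 + (lnorm (ldiff xs ys))\<^sup>2)"
    by (intro real_sqrt_le_mono) simp
  then show ?thesis unfolding lnorm_cons by simp
qed

lemma lnorm_cons2: "lnorm (ldiff xs ys) \<le> lnorm (ldiff (a#xs) (b#ys))"
proof -
  have "sqrt ((lnorm (ldiff xs ys))\<^sup>2) \<le> sqrt ((a-b)\<^sup>2 + (lnorm (ldiff xs ys))\<^sup>2)"
    by (intro real_sqrt_le_mono) simp
  then show ?thesis unfolding lnorm_cons using lnorm_nonneg by simp
qed

lemma lip1:
  assumes S: "sublinear_expectation_space H E" and Z: "Z \<in> H"
    and L: "\<And>a b. \<bar>f a - f b\<bar> \<le> K * \<bar>a - b\<bar>"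
  shows "(\<lambda>w. f (Z w)) \<in> H"
proof -
  have lp: "lip_poly 1 (\<lambda>ys. f (hd ys))"
    unfolding lip_poly_def
  proof (intro exI[of _ "max K 0"] exI[of _ 0] allI impI)
    fix x y :: "real list" assume "length x = 1" "length y = 1"
    then obtain a b where xy: "x = [a]" "y = [b]"
      by (metis One_nat_def length_0_conv length_Suc_conv)
    have "\<bar>f a - f b\<bar> \<le> max K 0 * \<bar>a-b\<bar>"
      by (meson L abs_ge_zero max.cobounded1 mult_right_mono order.trans)
    also have "\<dots> \<le> max K 0 * (1 + 1 + 1) * \<bar>a - b\<bar>" by (simp add: mult_right_mono)
    finally show "\<bar>f (hd x) - f (hd y)\<bar> \<le> max K 0 * (1 + lnorm x ^ 0 + lnorm y ^ 0) * lnorm (ldiff x y)"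
      using xy lnorm_single by simp
  qed
  have "(\<lambda>w. f (hd (at_pt [Z] w))) \<in> H"
    using sl_comp[OF S, of "[Z]" "\<lambda>ys. f (hd ys)"] Z lp by simp
  then show ?thesis by (simp add: at_pt_def)
qed

lemma sdist:
  assumes "same_distr E Y X" "\<And>a b. \<bar>f a - f b\<bar> \<le> K * \<bar>a - b\<bar>"
  shows "E (\<lambda>w. f (Y w)) = E (\<lambda>w. f (X w))"
proof -
  have lp: "lip_poly 1 (\<lambda>ys. f (hd ys))"
    unfolding lip_poly_def
  proof (intro exI[of _ "max K 0"] exI[of _ 0] allI impI)
    fix x y :: "real list" assume "length x = 1" "length y = 1"
    then obtain a b where xy: "x = [a]" "y = [b]"
      by (metis One_nat_def length_0_conv length_Suc_conv)
    have "\<bar>f a - f b\<bar> \<le> max K 0 * \<bar>a-b\<bar>"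
      by (meson assms(2) abs_ge_zero max.cobounded1 mult_right_mono order.trans)
    also have "\<dots> \<le> max K 0 * (1 + 1 + 1) * \<bar>a - b\<bar>" by (simp add: mult_right_mono)
    finally show "\<bar>f (hd x) - f (hd y)\<bar> \<le> max K 0 * (1 + lnorm x ^ 0 + lnorm y ^ 0) * lnorm (ldiff x y)"
      using xy lnorm_single by simp
  qed
  then have "E (\<lambda>w. (\<lambda>ys. f (hd ys)) [Y w]) = E (\<lambda>w. (\<lambda>ys. f (hd ys)) [X w])"
    using assms(1) unfolding same_distr_def by blast
  then show ?thesis by simp
qed

lemma E_bounds:
  assumes S: "sublinear_expectation_space H E" and X: "X \<in> H" and b: "\<And>w. a \<le> X w" "\<And>w. X w \<le> b"
  shows "ereal a \<le> E X" "E X \<le> ereal b"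
  using sl_mono[OF S sl_const[OF S] X, of a] sl_mono[OF S X sl_const[OF S], of b] b sl_constE[OF S]
  by auto

lemma E_finite:
  assumes S: "sublinear_expectation_space H E" and X: "X \<in> H" and b: "\<And>w. a \<le> X w" "\<And>w. X w \<le> b"
  shows "E X = ereal (real_of_ereal (E X))"
  using E_bounds[OF assms] by (cases "E X") auto

lemma capV_le:
  assumes "\<xi> \<in> H" "\<And>w. indicator A w \<le> \<xi> w"
  shows "capV H E A \<le> E \<xi>"
  unfolding capV_def using assms by (intro Inf_lower) blast

lemma le_capV:
  assumes S: "sublinear_expectation_space H E" and f: "f \<in> H" and le: "\<And>w. f w \<le> indicator A w"
  shows "E f \<le> capV H E A"
  unfolding capV_def
proof (rule Inf_greatest, clarify)
  fix \<xi> assume "\<xi> \<in> H" "\<forall>w. indicator A w \<le> \<xi> w"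
  then show "E f \<le> E \<xi>" using sl_mono[OF S f] le by (meson order.trans)
qed



lemma prod_lip_aux:
  fixes g :: "real \<Rightarrow> real"
  assumes g: "\<And>u. 0 \<le> g u" "\<And>u. g u \<le> B" and B1: "1 \<le> B"
    and L: "\<And>a b. \<bar>g a - g b\<bar> \<le> K * \<bar>a - b\<bar>" and K: "K \<ge> 0"
  shows "length x = length y \<Longrightarrow> \<bar>prod_list (map g x) - prod_list (map g y)\<bar>
      \<le> real (length x) * K * B ^ length x * lnorm (ldiff x y)"
proof (induct x arbitrary: y)
  case Nil then show ?case by simp
next
  case (Cons a xs)
  then obtain b ys where y: "y = b # ys" and len: "length xs = length ys"
    by (metis length_Suc_conv)
  let ?P = "prod_list (map g xs)" and ?Q = "prod_list (map g ys)"
  let ?l = "lnorm (ldiff (a#xs) (b#ys))" and ?k = "length xs"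
  have P0: "0 \<le> ?P" and PB: "?P \<le> B ^ ?k"
  proof -
    have "\<And>zs. 0 \<le> prod_list (map g zs) \<and> prod_list (map g zs) \<le> B ^ length zs"
    proof -
      fix zs show "0 \<le> prod_list (map g zs) \<and> prod_list (map g zs) \<le> B ^ length zs"
      proof (induct zs)
        case Nil then show ?case by simp
      next
        case (Cons c zs)
        have "g c * prod_list (map g zs) \<le> B * B ^ length zs"
          using Cons g[of c] B1 by (intro mult_mono) auto
        moreover have "0 \<le> g c * prod_list (map g zs)" using Cons g[of c] by simp
        ultimately show ?case by simp
      qed
    qed
    then show "0 \<le> ?P" "?P \<le> B ^ ?k" by auto
  qed
  have IH: "\<bar>?P - ?Q\<bar> \<le> real ?k * K * B ^ ?k * lnorm (ldiff xs ys)" using Cons len by simp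
  have l1: "\<bar>a - b\<bar> \<le> ?l" by (rule lnorm_cons1)
  have l2: "lnorm (ldiff xs ys) \<le> ?l" by (rule lnorm_cons2)
  have Bk: "B ^ ?k \<le> B ^ Suc ?k" using B1 by simp
  have "g a * ?P - g b * ?Q = (g a - g b) * ?P + g b * (?P - ?Q)" by algebra
  hence "\<bar>g a * ?P - g b * ?Q\<bar> \<le> \<bar>(g a - g b) * ?P\<bar> + \<bar>g b * (?P - ?Q)\<bar>"
    by (metis abs_triangle_ineq)
  also have "\<dots> = \<bar>g a - g b\<bar> * ?P + g b * \<bar>?P - ?Q\<bar>"
    using P0 g(1)[of b] by (simp add: abs_mult)
  also have "\<dots> \<le> (K * ?l) * B ^ Suc ?k + B * (real ?k * K * B ^ ?k * ?l)"
  proof (rule add_mono)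
    have "\<bar>g a - g b\<bar> \<le> K * ?l" using L[of a b] l1 K by (meson mult_left_mono order.trans)
    moreover have "?P \<le> B ^ Suc ?k" using PB Bk by linarith
    moreover have "0 \<le> K * ?l" using K lnorm_nonneg by simp
    ultimately show "\<bar>g a - g b\<bar> * ?P \<le> (K * ?l) * B ^ Suc ?k"
      using P0 by (meson abs_ge_zero mult_mono)
    have "real ?k * K * B ^ ?k * lnorm (ldiff xs ys) \<le> real ?k * K * B ^ ?k * ?l"
      using l2 K B1 by (intro mult_left_mono) auto
    then have "\<bar>?P - ?Q\<bar> \<le> real ?k * K * B ^ ?k * ?l" using IH by linarith
    then show "g b * \<bar>?P - ?Q\<bar> \<le> B * (real ?k * K * B ^ ?k * ?l)"
      using g[of b] by (meson abs_ge_zero mult_mono order.trans)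
  qed
  also have "\<dots> = real (length (a#xs)) * K * B ^ length (a#xs) * ?l"
    by (simp add: algebra_simps)
  finally show ?case using y by simp
qed

lemma prod_lip:
  fixes g :: "real \<Rightarrow> real"
  assumes g: "\<And>u. 0 \<le> g u" "\<And>u. g u \<le> B" and B1: "1 \<le> B"
    and L: "\<And>a b. \<bar>g a - g b\<bar> \<le> K * \<bar>a - b\<bar>" and K: "K \<ge> 0"
  shows "lip_poly n (\<lambda>ys. prod_list (map g ys))"
  unfolding lip_poly_def
proof (intro exI[of _ "real n * K * B ^ n"] exI[of _ 0] allI impI)
  fix x y :: "real list" assume x: "length x = n" and y: "length y = n"
  have "\<bar>prod_list (map g x) - prod_list (map g y)\<bar> \<le> real n * K * B ^ n * lnorm (ldiff x y)"
    using prod_lip_aux[OF assms, of x y] x y by simp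
  also have "\<dots> \<le> real n * K * B ^ n * (1 + lnorm x ^ 0 + lnorm y ^ 0) * lnorm (ldiff x y)"
    using K B1 lnorm_nonneg[of "ldiff x y"] by (simp add: mult_right_mono)
  finally show "\<bar>prod_list (map g x) - prod_list (map g y)\<bar>
     \<le> real n * K * B ^ n * (1 + lnorm x ^ 0 + lnorm y ^ 0) * lnorm (ldiff x y)" .
qed

lemma prod_conv:
  fixes Xs :: "nat \<Rightarrow> 'w \<Rightarrow> real" and n :: nat
  shows "prod_list (map g (at_pt (map Xs [1..<n+1]) w)) = (\<Prod>i\<in>{1..n}. g (Xs i w))"
proof -
  have "(\<Prod>i\<in>set [1..<n+1]. g (Xs i w)) = prod_list (map (\<lambda>i. g (Xs i w)) [1..<n+1])"
    by (rule prod.distinct_set_conv_list) simp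
  moreover have "set [1..<n+1] = {1..n}" by auto
  ultimately show ?thesis by (simp add: at_pt_def o_def)
qed

lemma prod_H:
  fixes g :: "real \<Rightarrow> real" and Xs :: "nat \<Rightarrow> 'w \<Rightarrow> real" and n :: nat
  assumes S: "sublinear_expectation_space H E" and XsH: "\<And>n. n \<ge> 1 \<Longrightarrow> Xs n \<in> H"
    and g: "\<And>u. 0 \<le> g u" "\<And>u. g u \<le> B" and B1: "1 \<le> B"
    and L: "\<And>a b. \<bar>g a - g b\<bar> \<le> K * \<bar>a - b\<bar>" and K: "K \<ge> 0"
  shows "(\<lambda>w. \<Prod>i\<in>{1..n}. g (Xs i w)) \<in> H"
proof -
  have "set (map Xs [1..<n+1]) \<subseteq> H" using XsH by auto
  from sl_comp[OF S this prod_lip[OF g B1 L K]]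
  show ?thesis by (simp only: prod_conv length_map length_upt diff_add_inverse2)
qed

lemma prod_E:
  fixes g :: "real \<Rightarrow> real" and Xs :: "nat \<Rightarrow> 'w \<Rightarrow> real" and n :: nat
  assumes S: "sublinear_expectation_space H E" and XsH: "\<And>n. n \<ge> 1 \<Longrightarrow> Xs n \<in> H"
    and XH: "X \<in> H"
    and indep: "\<And>i. i \<ge> 1 \<Longrightarrow> indep_of H E (Xs (i + 1)) (map Xs [1..<i+1])"
    and ident: "\<And>n. n \<ge> 1 \<Longrightarrow> same_distr E (Xs n) X"
    and g: "\<And>u. 0 \<le> g u" "\<And>u. g u \<le> B" and B1: "1 \<le> B"
    and L: "\<And>a b. \<bar>g a - g b\<bar> \<le> K * \<bar>a - b\<bar>" and K: "K \<ge> 0"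
    and e: "E (\<lambda>w. g (X w)) = ereal e"
  shows "E (\<lambda>w. \<Prod>i\<in>{1..n}. g (Xs i w)) = ereal (e ^ n)"
proof (induct n)
  case 0 then show ?case using sl_constE[OF S, of 1] by simp
next
  case (Suc n)
  have gH: "\<And>m. m \<ge> 1 \<Longrightarrow> (\<lambda>w. g (Xs m w)) \<in> H" using lip1[OF S XsH L] by blast
  have gE: "\<And>m. m \<ge> 1 \<Longrightarrow> E (\<lambda>w. g (Xs m w)) = ereal e"
    using sdist[OF ident L] e by simp
  have e0: "0 \<le> e" using E_bounds(1)[OF S lip1[OF S XH L], of 0 B] g e by simp
  show ?case
  proof (cases "n = 0")
    case True
    then show ?thesis using gE[of 1] by simp
  next
    case False
    hence n1: "n \<ge> 1" by simp
    let ?L = "map Xs [1..<n+1]" and ?Y = "Xs (n+1)" and ?\<phi> = "\<lambda>ys. prod_list (map g ys)"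
    have ind: "indep_of H E ?Y ?L" using indep[OF n1] .
    have lp: "lip_poly (length ?L + 1) ?\<phi>" by (rule prod_lip[OF g B1 L K])
    have split: "\<And>x y. ?\<phi> (x @ [y]) = ?\<phi> x * g y" by simp
    have inner: "\<And>x. E (\<lambda>w. ?\<phi> (x @ [?Y w])) = ereal (?\<phi> x * e)"
    proof -
      fix x :: "real list"
      have c0: "0 \<le> ?\<phi> x" by (induct x) (auto intro!: mult_nonneg_nonneg g)
      have "E (\<lambda>w. ?\<phi> (x @ [?Y w])) = E (\<lambda>w. ?\<phi> x * g (?Y w))" by simp
      also have "\<dots> = ereal (?\<phi> x) * E (\<lambda>w. g (?Y w))" using sl_hom[OF S gH c0] by simp
      also have "\<dots> = ereal (?\<phi> x * e)" using gE[of "n+1"] by simp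
      finally show "E (\<lambda>w. ?\<phi> (x @ [?Y w])) = ereal (?\<phi> x * e)" .
    qed
    have fin: "\<forall>x. length x = length ?L \<longrightarrow> \<bar>E (\<lambda>w. ?\<phi> (x @ [?Y w]))\<bar> < \<infinity>"
      using inner by simp
    have eq: "E (\<lambda>w. ?\<phi> (at_pt ?L w @ [?Y w])) =
          E (\<lambda>w. real_of_ereal (E (\<lambda>w'. ?\<phi> (at_pt ?L w @ [?Y w']))))"
      using ind lp fin unfolding indep_of_def by blast
    have lhs: "(\<lambda>w. ?\<phi> (at_pt ?L w @ [?Y w])) = (\<lambda>w. \<Prod>i\<in>{1..Suc n}. g (Xs i w))"
    proof
      fix w
      have "at_pt ?L w @ [?Y w] = at_pt (map Xs [1..<Suc n+1]) w" by (simp add: at_pt_def)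
      then show "?\<phi> (at_pt ?L w @ [?Y w]) = (\<Prod>i\<in>{1..Suc n}. g (Xs i w))"
        using prod_conv[of g Xs "Suc n" w] by simp
    qed
    have rhs: "(\<lambda>w. real_of_ereal (E (\<lambda>w'. ?\<phi> (at_pt ?L w @ [?Y w'])))) =
        (\<lambda>w. e * (\<Prod>i\<in>{1..n}. g (Xs i w)))"
    proof
      fix w
      have "real_of_ereal (E (\<lambda>w'. ?\<phi> (at_pt ?L w @ [?Y w']))) = ?\<phi> (at_pt ?L w) * e"
        using inner[of "at_pt ?L w"] by simp
      also have "\<dots> = e * (\<Prod>i\<in>{1..n}. g (Xs i w))" using prod_conv[of g Xs n w] by simp
      finally show "real_of_ereal (E (\<lambda>w'. ?\<phi> (at_pt ?L w @ [?Y w']))) = e * (\<Prod>i\<in>{1..n}. g (Xs i w))" .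
    qed
    have PH: "(\<lambda>w. \<Prod>i\<in>{1..n}. g (Xs i w)) \<in> H" by (rule prod_H[OF S XsH g B1 L K])
    have "E (\<lambda>w. \<Prod>i\<in>{1..Suc n}. g (Xs i w)) = E (\<lambda>w. e * (\<Prod>i\<in>{1..n}. g (Xs i w)))"
      using eq lhs rhs by simp
    also have "\<dots> = ereal e * ereal (e ^ n)" using sl_hom[OF S PH e0] Suc by simp
    finally show ?thesis by simp
  qed
qed



locale setting =
  fixes H :: "('w \<Rightarrow> real) set" and E :: "('w \<Rightarrow> real) \<Rightarrow> ereal" and X :: "'w \<Rightarrow> real"
    and l :: "real \<Rightarrow> real"
  assumes S: "sublinear_expectation_space H E" and XH: "X \<in> H"
    and EX0: "E X = 0"
    and l_def: "\<And>t. l t = real_of_ereal (E (\<lambda>w. min ((X w)\<^sup>2) (t\<^sup>2)))"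
begin

lemma fH: "(\<And>a b. \<bar>f a - f b\<bar> \<le> K * \<bar>a - b\<bar>) \<Longrightarrow> (\<lambda>w. f (X w)) \<in> H"
  using lip1[OF S XH] by blast

lemma Eadd: "f \<in> H \<Longrightarrow> g \<in> H \<Longrightarrow> E f \<le> ereal a \<Longrightarrow> E g \<le> ereal b \<Longrightarrow> E (\<lambda>w. f w + g w) \<le> ereal (a + b)"
proof -
  assume a: "f \<in> H" "g \<in> H" "E f \<le> ereal a" "E g \<le> ereal b"
  have "E (\<lambda>w. f w + g w) \<le> E f + E g" using sl_subadd[OF S a(1,2)] .
  also have "\<dots> \<le> ereal a + ereal b" using a(3,4) by (rule add_mono)
  finally show ?thesis by simp
qed

lemma Escale: "f \<in> H \<Longrightarrow> 0 \<le> a \<Longrightarrow> E f \<le> ereal b \<Longrightarrow> E (\<lambda>w. a * f w) \<le> ereal (a * b)"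
proof -
  assume a: "f \<in> H" "0 \<le> a" "E f \<le> ereal b"
  have "E (\<lambda>w. a * f w) = ereal a * E f" using sl_hom[OF S a(1,2)] .
  also have "\<dots> \<le> ereal a * ereal b" using a(2,3) by (intro ereal_mult_left_mono) auto
  finally show ?thesis by simp
qed

lemma Emono: "f \<in> H \<Longrightarrow> g \<in> H \<Longrightarrow> (\<And>w. f w \<le> g w) \<Longrightarrow> E g \<le> ereal b \<Longrightarrow> E f \<le> ereal b"
  using sl_mono[OF S] by (meson order.trans)

lemma min_lip: "\<bar>min (a\<^sup>2) (t\<^sup>2) - min (b\<^sup>2) (t\<^sup>2)\<bar> \<le> (2 * \<bar>t\<bar>) * \<bar>a - b\<bar>" for a b t :: real
proof -
  define p where "p = min \<bar>a\<bar> \<bar>t\<bar>"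
  define r where "r = min \<bar>b\<bar> \<bar>t\<bar>"
  have pa: "min (a\<^sup>2) (t\<^sup>2) = p\<^sup>2" unfolding p_def
    by (cases "\<bar>a\<bar> \<le> \<bar>t\<bar>") (auto simp: min_def abs_le_square_iff)
  have rb: "min (b\<^sup>2) (t\<^sup>2) = r\<^sup>2" unfolding r_def
    by (cases "\<bar>b\<bar> \<le> \<bar>t\<bar>") (auto simp: min_def abs_le_square_iff)
  have d0: "abs (abs a - abs b) \<le> \<bar>a - b\<bar>" by (rule abs_triangle_ineq3)
  have "\<bar>p - r\<bar> \<le> abs (abs a - abs b)" unfolding p_def r_def by (simp add: min_def abs_if)
  with d0 have d: "\<bar>p - r\<bar> \<le> \<bar>a - b\<bar>" by linarith
  have s: "p + r \<le> 2 * \<bar>t\<bar>" "0 \<le> p" "0 \<le> r" unfolding p_def r_def by auto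
  have "p\<^sup>2 - r\<^sup>2 = (p - r) * (p + r)" by (simp add: power2_eq_square algebra_simps)
  then have "\<bar>p\<^sup>2 - r\<^sup>2\<bar> = \<bar>p - r\<bar> * (p + r)" using s by (simp add: abs_mult)
  also have "\<dots> \<le> \<bar>a - b\<bar> * (2 * \<bar>t\<bar>)" using d s by (intro mult_mono) auto
  finally show ?thesis using pa rb by (simp add: mult.commute)
qed

lemma lH: "(\<lambda>w. min ((X w)\<^sup>2) (t\<^sup>2)) \<in> H"
  using fH[of "\<lambda>u. min (u\<^sup>2) (t\<^sup>2)" "2*\<bar>t\<bar>"] min_lip by blast

lemma lE: "E (\<lambda>w. min ((X w)\<^sup>2) (t\<^sup>2)) = ereal (l t)" "0 \<le> l t" "l t \<le> t\<^sup>2"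
proof -
  have b: "\<And>w. 0 \<le> min ((X w)\<^sup>2) (t\<^sup>2)" "\<And>w. min ((X w)\<^sup>2) (t\<^sup>2) \<le> t\<^sup>2" by auto
  show e: "E (\<lambda>w. min ((X w)\<^sup>2) (t\<^sup>2)) = ereal (l t)"
    using E_finite[OF S lH b] l_def by simp
  show "0 \<le> l t" "l t \<le> t\<^sup>2" using E_bounds[OF S lH b] e by auto
qed

lemma l_mono: "\<bar>s\<bar> \<le> \<bar>t\<bar> \<Longrightarrow> l s \<le> l t"
proof -
  assume st: "\<bar>s\<bar> \<le> \<bar>t\<bar>"
  have "s\<^sup>2 \<le> t\<^sup>2" using st by (metis abs_ge_zero power2_abs power_mono)
  then have "E (\<lambda>w. min ((X w)\<^sup>2) (s\<^sup>2)) \<le> E (\<lambda>w. min ((X w)\<^sup>2) (t\<^sup>2))"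
    by (intro sl_mono[OF S lH lH]) auto
  then show ?thesis using lE(1)[of s] lE(1)[of t] by simp
qed

definition D :: "real \<Rightarrow> ereal" where "D c = E (\<lambda>w. max (\<bar>X w\<bar> - c) 0)"

lemma DH: "(\<lambda>w. max (\<bar>X w\<bar> - c) 0) \<in> H"
  by (rule fH[of _ 1]) (simp add: abs_le_iff max_def, linarith)

lemma D_nonneg: "0 \<le> D c"
  unfolding D_def using sl_mono[OF S sl_const[OF S] DH, of 0] sl_constE[OF S, of 0]
  by (simp add: zero_ereal_def)

lemma piece_H: "(\<lambda>w. min (max (\<bar>X w\<bar> - a) 0) a) \<in> H"
  by (rule fH[of _ 1]) (simp add: abs_le_iff max_def min_def, linarith)

lemma piece_bound:
  assumes a: "a > 0"
  shows "E (\<lambda>w. min (max (\<bar>X w\<bar> - a) 0) a) \<le> ereal a * capV H E {w. a \<le> \<bar>X w\<bar>}"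
proof -
  define p where "p = (\<lambda>w. min (max (\<bar>X w\<bar> - a) 0) a / a)"
  have pH: "p \<in> H" unfolding p_def
    by (rule fH[of _ "1/a"]) (use a in \<open>auto simp: abs_le_iff max_def min_def divide_simps\<close>)
  have "\<And>w. p w \<le> indicator {w. a \<le> \<bar>X w\<bar>} w"
    unfolding p_def using a by (auto simp: indicator_def divide_simps max_def min_def)
  then have Ep: "E p \<le> capV H E {w. a \<le> \<bar>X w\<bar>}" by (rule le_capV[OF S pH])
  have "(\<lambda>w. min (max (\<bar>X w\<bar> - a) 0) a) = (\<lambda>w. a * p w)" unfolding p_def using a by auto
  then have "E (\<lambda>w. min (max (\<bar>X w\<bar> - a) 0) a) = ereal a * E p" using sl_hom[OF S pH] a by simp
  also have "\<dots> \<le> ereal a * capV H E {w. a \<le> \<bar>X w\<bar>}" using Ep a by (intro ereal_mult_left_mono) auto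
  finally show ?thesis .
qed

lemma D_split: "D a \<le> E (\<lambda>w. min (max (\<bar>X w\<bar> - a) 0) a) + D (2*a)" if "a \<ge> 0"
proof -
  have "(\<lambda>w. max (\<bar>X w\<bar> - a) 0) = (\<lambda>w. min (max (\<bar>X w\<bar> - a) 0) a + max (\<bar>X w\<bar> - 2*a) 0)"
    using that by (auto simp: max_def min_def)
  then show ?thesis unfolding D_def using sl_subadd[OF S piece_H DH] by simp
qed

end


context setting begin

lemma cap_bound:
  assumes fH: "f \<in> H" and b: "b > 0" and le: "\<And>w. f w \<le> b * indicator A w"
  shows "E f \<le> ereal b * capV H E A"
proof -
  define p where "p = (\<lambda>w. f w / b)"
  have pH: "p \<in> H" unfolding p_def using sl_smul[OF S fH, of "1/b"] by simp
  have "\<And>w. p w \<le> indicator A w" unfolding p_def using le b by (simp add: divide_simps mult.commute)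
  then have Ep: "E p \<le> capV H E A" by (rule le_capV[OF S pH])
  have "f = (\<lambda>w. b * p w)" unfolding p_def using b by auto
  then have "E f = ereal b * E p" using sl_hom[OF S pH] b by simp
  also have "\<dots> \<le> ereal b * capV H E A" using Ep b by (intro ereal_mult_left_mono) auto
  finally show ?thesis .
qed

lemma cap_bound2:
  assumes fH: "f \<in> H" and b: "b > 0" and le: "\<And>w. f w \<le> b * indicator A w"
    and c: "capV H E A \<le> ereal c"
  shows "E f \<le> ereal (b * c)"
proof -
  have "E f \<le> ereal b * capV H E A" by (rule cap_bound[OF fH b le])
  also have "\<dots> \<le> ereal b * ereal c" using c b by (intro ereal_mult_left_mono) auto
  finally show ?thesis by simp
qed

lemma dbl:
  assumes cap: "\<And>s. s \<ge> sz \<Longrightarrow> capV H E {w. s \<le> \<bar>X w\<bar>} \<le> ereal (\<eta> * (l s / s\<^sup>2))"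
    and a: "a \<ge> sz" "a > 0"
  shows "l (2*a) \<le> (1 + 3*\<eta>) * l a"
proof -
  define d where "d = (\<lambda>w. min ((X w)\<^sup>2) ((2*a)\<^sup>2) + (-1) * min ((X w)\<^sup>2) (a\<^sup>2))"
  have dH: "d \<in> H" unfolding d_def by (rule sl_add[OF S lH sl_smul[OF S lH]])
  have dle: "\<And>w. d w \<le> (3*a\<^sup>2) * indicator {w. a \<le> \<bar>X w\<bar>} w"
  proof -
    fix w
    show "d w \<le> (3*a\<^sup>2) * indicator {w. a \<le> \<bar>X w\<bar>} w"
    proof (cases "a \<le> \<bar>X w\<bar>")
      case True
      have "a\<^sup>2 \<le> (X w)\<^sup>2" using True a by (metis abs_of_pos power2_abs power_mono less_imp_le)
      then show ?thesis using True unfolding d_def by (auto simp: min_def power2_eq_square)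
    next
      case False
      have "(X w)\<^sup>2 \<le> a\<^sup>2" using False a by (metis abs_ge_zero power2_abs power_mono not_le less_imp_le)
      moreover have "a\<^sup>2 \<le> (2*a)\<^sup>2" using a by (simp add: power2_eq_square)
      ultimately show ?thesis using False unfolding d_def by (auto simp: min_def)
    qed
  qed
  have a2: "3*a\<^sup>2 > 0" using a by simp
  have Ed: "E d \<le> ereal (3*a\<^sup>2 * (\<eta> * (l a / a\<^sup>2)))"
    by (rule cap_bound2[OF dH a2 dle cap[OF a(1)]])
  have "(\<lambda>w. min ((X w)\<^sup>2) ((2*a)\<^sup>2)) = (\<lambda>w. min ((X w)\<^sup>2) (a\<^sup>2) + d w)" unfolding d_def by auto
  then have "E (\<lambda>w. min ((X w)\<^sup>2) ((2*a)\<^sup>2)) \<le> ereal (l a + 3*a\<^sup>2 * (\<eta> * (l a / a\<^sup>2)))"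
    using Eadd[OF lH dH _ Ed] lE(1)[of a] by simp
  then have "l (2*a) \<le> l a + 3*a\<^sup>2 * (\<eta> * (l a / a\<^sup>2))" using lE(1)[of "2*a"] by simp
  also have "\<dots> = (1 + 3*\<eta>) * l a" using a by (simp add: field_simps)
  finally show ?thesis .
qed

lemma lpow:
  assumes cap: "\<And>s. s \<ge> sz \<Longrightarrow> capV H E {w. s \<le> \<bar>X w\<bar>} \<le> ereal (\<eta> * (l s / s\<^sup>2))"
    and a: "a \<ge> sz" "a > 0" and eta: "\<eta> \<ge> 0"
  shows "l (2^K * a) \<le> (1 + 3*\<eta>)^K * l a"
proof (induct K)
  case 0 then show ?case by simp
next
  case (Suc K)
  have bK: "2^K * a \<ge> a" using a by simp
  have "l (2^Suc K * a) = l (2 * (2^K * a))" by (simp add: mult.assoc)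
  also have "\<dots> \<le> (1 + 3*\<eta>) * l (2^K * a)"
    by (rule dbl[where sz=sz and \<eta>=\<eta> and a="2^K*a", OF cap]) (use order_trans[OF a(1) bK] a in auto)
  also have "\<dots> \<le> (1 + 3*\<eta>) * ((1 + 3*\<eta>)^K * l a)" using Suc eta by (intro mult_left_mono) auto
  finally show ?case by simp
qed

lemma Dsum:
  assumes cap: "\<And>s. s \<ge> sz \<Longrightarrow> capV H E {w. s \<le> \<bar>X w\<bar>} \<le> ereal (\<eta> * (l s / s\<^sup>2))"
    and a: "a \<ge> sz" "a > 0" and eta: "\<eta> \<ge> 0"
  shows "D a \<le> ereal (\<Sum>k<K. \<eta> * (1 + 3*\<eta>)^k * l a / (2^k * a)) + D (2^K * a)"
proof (induct K)
  case 0 then show ?case by simp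
next
  case (Suc K)
  define b where "b = 2^K * a"
  have b2: "b \<ge> a" "b > 0" using a unfolding b_def by auto
  have b: "b \<ge> sz" "b > 0" "b \<ge> a" using b2 a by auto
  have "E (\<lambda>w. min (max (\<bar>X w\<bar> - b) 0) b) \<le> ereal (b * (\<eta> * (l b / b\<^sup>2)))"
  proof (rule cap_bound2[OF piece_H b(2) _ cap[OF b(1)]])
    fix w show "min (max (\<bar>X w\<bar> - b) 0) b \<le> b * indicator {w. b \<le> \<bar>X w\<bar>} w"
      using b by (auto simp: indicator_def min_def max_def)
  qed
  also have "b * (\<eta> * (l b / b\<^sup>2)) \<le> \<eta> * (1 + 3*\<eta>)^K * l a / (2^K * a)"
  proof -
    have "b * (\<eta> * (l b / b\<^sup>2)) = \<eta> * l b / b" using b by (simp add: power2_eq_square field_simps)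
    also have "\<dots> \<le> \<eta> * ((1 + 3*\<eta>)^K * l a) / b"
      using lpow[OF cap a eta, of K] b eta unfolding b_def by (intro divide_right_mono mult_left_mono) auto
    finally show ?thesis unfolding b_def by simp
  qed
  finally have p: "E (\<lambda>w. min (max (\<bar>X w\<bar> - b) 0) b) \<le> ereal (\<eta> * (1 + 3*\<eta>)^K * l a / (2^K * a))"
    by simp
  have "D a \<le> ereal (\<Sum>k<K. \<eta> * (1 + 3*\<eta>)^k * l a / (2^k * a)) + D b" using Suc unfolding b_def .
  also have "D b \<le> ereal (\<eta> * (1 + 3*\<eta>)^K * l a / (2^K * a)) + D (2^Suc K * a)"
  proof -
    have "D b \<le> E (\<lambda>w. min (max (\<bar>X w\<bar> - b) 0) b) + D (2*b)" using D_split[of b] b by simp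
    also have "\<dots> \<le> ereal (\<eta> * (1 + 3*\<eta>)^K * l a / (2^K * a)) + D (2*b)" using p by (rule add_right_mono)
    finally show ?thesis unfolding b_def by (simp add: mult.assoc)
  qed
  finally show ?case
    by (simp add: add.assoc[symmetric] add_left_mono)
qed

lemma Dbound:
  assumes cap: "\<And>s. s \<ge> sz \<Longrightarrow> capV H E {w. s \<le> \<bar>X w\<bar>} \<le> ereal (\<eta> * (l s / s\<^sup>2))"
    and a: "a \<ge> sz" "a > 0" and eta: "\<eta> > 0" "\<eta> \<le> 1/6"
    and lim: "(D \<longlongrightarrow> 0) at_top"
  shows "D a \<le> ereal (4 * \<eta> * l a / a)"
proof (rule ereal_le_epsilon2)
  fix \<delta> :: real assume \<delta>: "0 < \<delta>"
  have "eventually (\<lambda>c. D c < ereal \<delta>) at_top"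
    using order_tendstoD(2)[OF lim, of "ereal \<delta>"] \<delta> by (simp add: zero_ereal_def)
  then obtain c0 where c0: "\<And>c. c \<ge> c0 \<Longrightarrow> D c < ereal \<delta>"
    by (auto simp: eventually_at_top_linorder)
  obtain K where K: "c0 / a < 2 ^ K" using real_arch_pow[of 2 "c0/a"] by auto
  have "c0 \<le> 2^K * a" using K a by (simp add: divide_simps)
  then have DK: "D (2^K * a) \<le> ereal \<delta>" using c0[of "2^K*a"] by simp
  define r where "r = (1 + 3*\<eta>) / 2"
  have r: "0 < r" "r < 1" "r \<le> 3/4" using eta unfolding r_def by auto
  have sumeq: "(\<Sum>k<K. \<eta> * (1 + 3*\<eta>)^k * l a / (2^k * a)) = \<eta> * l a / a * (\<Sum>k<K. r^k)"
    unfolding r_def by (simp add: sum_distrib_left power_divide field_simps)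
  have "(\<Sum>k<K. r^k) < 1 / (1 - r)" using geometric_sum_less[OF r(1,2)] by simp
  also have "1 / (1 - r) \<le> 4" using r by (simp add: divide_simps)
  finally have gs: "(\<Sum>k<K. r^k) \<le> 4" by simp
  have la: "0 \<le> \<eta> * l a / a" using lE(2)[of a] a eta by simp
  have "(\<Sum>k<K. \<eta> * (1 + 3*\<eta>)^k * l a / (2^k * a)) \<le> \<eta> * l a / a * 4"
    unfolding sumeq by (rule mult_left_mono[OF gs la])
  also have "\<eta> * l a / a * 4 = 4 * \<eta> * l a / a" by simp
  finally have sb: "ereal (\<Sum>k<K. \<eta> * (1 + 3*\<eta>)^k * l a / (2^k * a)) \<le> ereal (4 * \<eta> * l a / a)"
    by simp
  have "D a \<le> ereal (\<Sum>k<K. \<eta> * (1 + 3*\<eta>)^k * l a / (2^k * a)) + D (2^K * a)"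
    using Dsum[where sz=sz and \<eta>=\<eta> and a=a, OF cap a(1,2)] eta by simp
  also have "\<dots> \<le> ereal (4 * \<eta> * l a / a) + D (2^K * a)" using sb by (rule add_right_mono)
  finally have "D a \<le> ereal (4 * \<eta> * l a / a) + D (2^K * a)" .
  also have "\<dots> \<le> ereal (4 * \<eta> * l a / a) + ereal \<delta>" using DK by (rule add_left_mono)
  finally show "D a \<le> ereal (4 * \<eta> * l a / a) + ereal \<delta>" .
qed

end


lemma exp_lip: "a \<le> M \<Longrightarrow> b \<le> M \<Longrightarrow> \<bar>exp a - exp b\<bar> \<le> exp M * \<bar>a - b\<bar>" for a b M :: real
proof -
  have key: "\<And>x y. y \<le> x \<Longrightarrow> x \<le> M \<Longrightarrow> exp x - exp y \<le> exp M * (x - y)"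
  proof -
    fix x y :: real assume yx: "y \<le> x" and xM: "x \<le> M"
    have "1 + (y - x) \<le> exp (y - x)" by (rule exp_ge_add_one_self)
    then have "exp x * (1 + (y - x)) \<le> exp x * exp (y - x)" by (intro mult_left_mono) auto
    also have "exp x * exp (y - x) = exp y" by (simp add: exp_diff)
    finally have "exp x - exp y \<le> exp x * (x - y)" by (simp add: algebra_simps)
    also have "\<dots> \<le> exp M * (x - y)" using yx xM by (intro mult_right_mono) auto
    finally show "exp x - exp y \<le> exp M * (x - y)" .
  qed
  assume aM: "a \<le> M" and bM: "b \<le> M"
  show ?thesis
  proof (cases "b \<le> a")
    case True
    have k: "exp a - exp b \<le> exp M * (a - b)" by (rule key[OF True aM])
    have "exp b \<le> exp a" using True by simp
    then show ?thesis using k True by simp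
  next
    case False
    then have ab: "a \<le> b" by simp
    have k: "exp b - exp a \<le> exp M * (b - a)" by (rule key[OF ab bM])
    have "exp a \<le> exp b" using ab by simp
    then show ?thesis using k ab by (simp add: abs_minus_commute)
  qed
qed

lemma lin2: "(x::real) \<le> y + z \<Longrightarrow> y \<le> 1 * z \<Longrightarrow> x \<le> 2*z" by linarith

definition clip :: "real \<Rightarrow> real \<Rightarrow> real" where "clip c u = max (- c) (min u c)"

lemma clip_lip: "\<bar>clip c a - clip c b\<bar> \<le> 1 * \<bar>a - b\<bar>"
  unfolding clip_def by (simp add: abs_le_iff max_def min_def, linarith)

lemma clip_abs: "c \<ge> 0 \<Longrightarrow> \<bar>clip c u\<bar> \<le> c"
  unfolding clip_def by (simp add: abs_le_iff max_def min_def)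

lemma clip_sq: assumes c: "c \<ge> 0" shows "(clip c u)\<^sup>2 = min (u\<^sup>2) (c\<^sup>2)"
proof (cases "\<bar>u\<bar> \<le> c")
  case True
  then have "clip c u = u" unfolding clip_def by (simp add: abs_le_iff max_def min_def)
  moreover have "u\<^sup>2 \<le> c\<^sup>2" using abs_le_square_iff[of u c] True c by simp
  ultimately show ?thesis by simp
next
  case False
  then have "clip c u = c \<or> clip c u = - c" unfolding clip_def by (auto simp: max_def min_def)
  then have "(clip c u)\<^sup>2 = c\<^sup>2" by auto
  moreover have "c\<^sup>2 \<le> u\<^sup>2" using abs_le_square_iff[of c u] False c by simp
  ultimately show ?thesis by simp
qed

lemma g1_pt:
  assumes c: "c \<ge> 0" and lam: "la \<ge> 0"
  shows "exp (la * clip c u) \<le> 1 + la * clip c u + (la\<^sup>2 / 2 * exp (la * c)) * min (u\<^sup>2) (c\<^sup>2)"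
proof -
  define y where "y = la * clip c u"
  obtain t where t: "\<bar>t\<bar> \<le> \<bar>y\<bar>" and e: "exp y = (\<Sum>m<2. y ^ m / fact m) + exp t / fact 2 * y ^ 2"
    using Maclaurin_exp_le[of y 2] by blast
  have e2: "exp y = 1 + y + exp t / 2 * y\<^sup>2" using e by (simp add: numeral_2_eq_2)
  have "\<bar>y\<bar> \<le> la * c" unfolding y_def using clip_abs[OF c, of u] lam by (simp add: abs_mult mult_left_mono)
  then have "exp t \<le> exp (la * c)" using t by simp
  then have ineq: "exp t / 2 * y\<^sup>2 \<le> exp (la * c) / 2 * y\<^sup>2" by (intro mult_right_mono) auto
  have ysq: "y\<^sup>2 = la\<^sup>2 * min (u\<^sup>2) (c\<^sup>2)" unfolding y_def using clip_sq[OF c] by (simp add: power_mult_distrib)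
  have "exp y \<le> 1 + y + exp (la * c) / 2 * y\<^sup>2" using e2 ineq by linarith
  also have "exp (la * c) / 2 * y\<^sup>2 = (la\<^sup>2 / 2 * exp (la * c)) * min (u\<^sup>2) (c\<^sup>2)"
    unfolding ysq by (simp add: algebra_simps)
  finally show ?thesis unfolding y_def .
qed

definition hh :: "real \<Rightarrow> real \<Rightarrow> real" where "hh c u = min 1 (max 0 (2 * \<bar>u\<bar> / c - 1))"

lemma hh_lip: "c > 0 \<Longrightarrow> \<bar>hh c a - hh c b\<bar> \<le> (2 / c) * \<bar>a - b\<bar>"
proof -
  assume c: "c > 0"
  have c2: "2/c > 0" using c by simp
  have "\<bar>hh c a - hh c b\<bar> \<le> \<bar>(2 * \<bar>a\<bar> / c - 1) - (2 * \<bar>b\<bar> / c - 1)\<bar>"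
    unfolding hh_def by (simp add: abs_le_iff max_def min_def, linarith)
  also have "(2 * \<bar>a\<bar> / c - 1) - (2 * \<bar>b\<bar> / c - 1) = (2/c) * (\<bar>a\<bar> - \<bar>b\<bar>)"
    using c by (simp add: field_simps)
  also have "\<bar>(2/c) * (\<bar>a\<bar> - \<bar>b\<bar>)\<bar> = (2/c) * abs (\<bar>a\<bar> - \<bar>b\<bar>)" by (simp only: abs_mult abs_of_pos[OF c2])
  also have "\<dots> \<le> (2/c) * \<bar>a - b\<bar>" using c abs_triangle_ineq3[of a b] by (intro mult_left_mono) auto
  finally show ?thesis .
qed

lemma hh_range: "0 \<le> hh c u" "hh c u \<le> 1" unfolding hh_def by auto

lemma hh_big: "c > 0 \<Longrightarrow> c \<le> \<bar>u\<bar> \<Longrightarrow> hh c u = 1"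
  unfolding hh_def by (simp add: divide_simps)

lemma hh_small: "c > 0 \<Longrightarrow> \<bar>u\<bar> < c / 2 \<Longrightarrow> hh c u = 0"
  unfolding hh_def by (simp add: divide_simps)

lemma g2_pt: "\<theta> \<ge> 0 \<Longrightarrow> exp (\<theta> * hh c u) \<le> 1 + (exp \<theta> - 1) * hh c u"
proof -
  have "exp ((1 - hh c u) *\<^sub>R 0 + hh c u *\<^sub>R \<theta>) \<le> (1 - hh c u) * exp 0 + hh c u * exp \<theta>"
    using convex_onD[OF exp_convex] hh_range by blast
  then show ?thesis by (simp add: algebra_simps)
qed

lemma g1_lip:
  assumes c: "c > 0" and lam: "la \<ge> 0"
  shows "\<bar>exp (la * clip c a) - exp (la * clip c b)\<bar> \<le> (exp (la * c) * la) * \<bar>a - b\<bar>"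
proof -
  have "\<bar>exp (la * clip c a) - exp (la * clip c b)\<bar> \<le> exp (la * c) * \<bar>la * clip c a - la * clip c b\<bar>"
    using clip_abs[of c] c lam by (intro exp_lip) (auto simp: abs_le_iff mult_left_mono)
  also have "\<dots> \<le> exp (la * c) * (la * \<bar>a - b\<bar>)"
    using clip_lip[of c a b] lam by (intro mult_left_mono) (auto simp: abs_mult right_diff_distrib[symmetric] mult_left_mono)
  finally show ?thesis by simp
qed

lemma g2_lip:
  assumes c: "c > 0" and th: "\<theta> \<ge> 0"
  shows "\<bar>exp (\<theta> * hh c a) - exp (\<theta> * hh c b)\<bar> \<le> (exp \<theta> * (\<theta> * (2/c))) * \<bar>a - b\<bar>"
proof -
    have "\<bar>exp (\<theta> * hh c a) - exp (\<theta> * hh c b)\<bar> \<le> exp \<theta> * \<bar>\<theta> * hh c a - \<theta> * hh c b\<bar>"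
      using hh_range th by (intro exp_lip) (auto simp: mult_left_le)
    also have "\<dots> \<le> exp \<theta> * (\<theta> * ((2/c) * \<bar>a - b\<bar>))"
    proof (rule mult_left_mono)
      have "\<bar>\<theta> * hh c a - \<theta> * hh c b\<bar> = \<theta> * \<bar>hh c a - hh c b\<bar>"
        using th by (simp add: abs_mult right_diff_distrib[symmetric])
      also have "\<dots> \<le> \<theta> * ((2/c) * \<bar>a - b\<bar>)" using hh_lip[OF c, of a b] th by (rule mult_left_mono)
      finally show "\<bar>\<theta> * hh c a - \<theta> * hh c b\<bar> \<le> \<theta> * ((2/c) * \<bar>a - b\<bar>)" .
    qed simp
    finally show ?thesis by (simp add: mult.assoc)
qed

context setting begin

lemma E_g1:
  assumes c: "c > 0" and lam: "la \<ge> 0" and Dc: "D c \<le> ereal dc"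
  shows "E (\<lambda>w. exp (la * clip c (X w))) \<le> ereal (1 + la * dc + (la\<^sup>2 / 2 * exp (la * c)) * l c)"
proof -
  let ?k = "la\<^sup>2 / 2 * exp (la * c)"
  have cH: "(\<lambda>w. clip c (X w)) \<in> H" using fH[OF clip_lip] .
  have dH: "(\<lambda>w. clip c (X w) - X w) \<in> H"
  proof (rule fH[of _ 2])
    fix a b
    have eq: "clip c a - a - (clip c b - b) = (clip c a - clip c b) - (a - b)" by simp
    have "\<bar>(clip c a - clip c b) - (a - b)\<bar> \<le> \<bar>clip c a - clip c b\<bar> + \<bar>a - b\<bar>" by (rule abs_triangle_ineq4)
    then show "\<bar>clip c a - a - (clip c b - b)\<bar> \<le> 2 * \<bar>a - b\<bar>" unfolding eq
      using clip_lip[of c a b] by (intro lin2) auto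
  qed
  have "E (\<lambda>w. clip c (X w) - X w) \<le> D c" unfolding D_def
    by (rule sl_mono[OF S dH DH]) (simp add: clip_def max_def min_def, linarith)
  then have Ed: "E (\<lambda>w. clip c (X w) - X w) \<le> ereal dc" using Dc by simp
  have EX: "E X \<le> ereal 0" using EX0 by simp
  have "E (\<lambda>w. X w + (clip c (X w) - X w)) \<le> ereal (0 + dc)" by (rule Eadd[OF XH dH EX Ed])
  then have Ec: "E (\<lambda>w. clip c (X w)) \<le> ereal dc" by simp
  have E1: "E (\<lambda>w. la * clip c (X w)) \<le> ereal (la * dc)" by (rule Escale[OF cH lam Ec])
  have E2: "E (\<lambda>w. ?k * min ((X w)\<^sup>2) (c\<^sup>2)) \<le> ereal (?k * l c)"
    by (rule Escale[OF lH]) (use lE(1) in auto)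
  have H1: "(\<lambda>w. la * clip c (X w)) \<in> H" by (rule sl_smul[OF S cH])
  have H2: "(\<lambda>w. ?k * min ((X w)\<^sup>2) (c\<^sup>2)) \<in> H" by (rule sl_smul[OF S lH])
  have H12: "(\<lambda>w. la * clip c (X w) + ?k * min ((X w)\<^sup>2) (c\<^sup>2)) \<in> H" by (rule sl_add[OF S H1 H2])
  have E12: "E (\<lambda>w. la * clip c (X w) + ?k * min ((X w)\<^sup>2) (c\<^sup>2)) \<le> ereal (la * dc + ?k * l c)"
    by (rule Eadd[OF H1 H2 E1 E2])
  have E0: "E (\<lambda>w. 1) \<le> ereal 1" using sl_constE[OF S] by simp
  have Fall: "E (\<lambda>w. 1 + (la * clip c (X w) + ?k * min ((X w)\<^sup>2) (c\<^sup>2))) \<le> ereal (1 + (la * dc + ?k * l c))"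
    by (rule Eadd[OF sl_const[OF S] H12 E0 E12])
  have FH: "(\<lambda>w. 1 + (la * clip c (X w) + ?k * min ((X w)\<^sup>2) (c\<^sup>2))) \<in> H" by (rule sl_add[OF S sl_const[OF S] H12])
  have gH: "(\<lambda>w. exp (la * clip c (X w))) \<in> H"
  proof (rule fH[of _ "exp (la * c) * la"])
    fix a b
    have "\<bar>exp (la * clip c a) - exp (la * clip c b)\<bar> \<le> exp (la * c) * \<bar>la * clip c a - la * clip c b\<bar>"
      using clip_abs[of c] c lam by (intro exp_lip) (auto simp: abs_le_iff mult_left_mono)
    also have "\<dots> \<le> exp (la * c) * (la * \<bar>a - b\<bar>)"
      using clip_lip[of c a b] lam by (intro mult_left_mono) (auto simp: abs_mult right_diff_distrib[symmetric] mult_left_mono)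
    finally show "\<bar>exp (la * clip c a) - exp (la * clip c b)\<bar> \<le> exp (la * c) * la * \<bar>a - b\<bar>" by simp
  qed
  show ?thesis
    using Emono[OF gH FH _ Fall] g1_pt[OF _ lam] c by (simp add: add.assoc)
qed

lemma E_g2:
  assumes c: "c > 0" and th: "\<theta> \<ge> 0" and cap: "capV H E {w. c/2 \<le> \<bar>X w\<bar>} \<le> ereal p"
  shows "E (\<lambda>w. exp (\<theta> * hh c (X w))) \<le> ereal (1 + (exp \<theta> - 1) * p)"
proof -
  have hH: "(\<lambda>w. hh c (X w)) \<in> H" using fH[OF hh_lip[OF c]] .
  have "\<And>w. hh c (X w) \<le> indicator {w. c/2 \<le> \<bar>X w\<bar>} w"
    using hh_small[OF c] hh_range by (force simp: indicator_def)
  then have "E (\<lambda>w. hh c (X w)) \<le> ereal p" using le_capV[OF S hH] cap by (meson order.trans)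
  then have E1: "E (\<lambda>w. (exp \<theta> - 1) * hh c (X w)) \<le> ereal ((exp \<theta> - 1) * p)"
    using th by (intro Escale[OF hH]) auto
  have H1: "(\<lambda>w. (exp \<theta> - 1) * hh c (X w)) \<in> H" by (rule sl_smul[OF S hH])
  have E0: "E (\<lambda>w. 1) \<le> ereal 1" using sl_constE[OF S] by simp
  have Fall: "E (\<lambda>w. 1 + (exp \<theta> - 1) * hh c (X w)) \<le> ereal (1 + (exp \<theta> - 1) * p)"
    by (rule Eadd[OF sl_const[OF S] H1 E0 E1])
  have FH: "(\<lambda>w. 1 + (exp \<theta> - 1) * hh c (X w)) \<in> H" by (rule sl_add[OF S sl_const[OF S] H1])
  have gH: "(\<lambda>w. exp (\<theta> * hh c (X w))) \<in> H"
  proof (rule fH[of _ "exp \<theta> * (\<theta> * (2/c))"])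
    fix a b
    have "\<bar>exp (\<theta> * hh c a) - exp (\<theta> * hh c b)\<bar> \<le> exp \<theta> * \<bar>\<theta> * hh c a - \<theta> * hh c b\<bar>"
      using hh_range th by (intro exp_lip) (auto simp: mult_left_le)
    also have "\<dots> \<le> exp \<theta> * (\<theta> * ((2/c) * \<bar>a - b\<bar>))"
    proof (rule mult_left_mono)
      have "\<bar>\<theta> * hh c a - \<theta> * hh c b\<bar> = \<theta> * \<bar>hh c a - hh c b\<bar>"
        using th by (simp add: abs_mult right_diff_distrib[symmetric])
      also have "\<dots> \<le> \<theta> * ((2/c) * \<bar>a - b\<bar>)" using hh_lip[OF c, of a b] th by (rule mult_left_mono)
      finally show "\<bar>\<theta> * hh c a - \<theta> * hh c b\<bar> \<le> \<theta> * ((2/c) * \<bar>a - b\<bar>)" .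
    qed simp
    finally show "\<bar>exp (\<theta> * hh c a) - exp (\<theta> * hh c b)\<bar> \<le> exp \<theta> * (\<theta> * (2/c)) * \<bar>a - b\<bar>"
      by (simp add: mult.assoc)
  qed
  show ?thesis using Emono[OF gH FH _ Fall] g2_pt[OF th] by simp
qed

end


lemma z_facts:
  fixes l :: "real \<Rightarrow> real"
  assumes lmono: "\<And>s t. 0 \<le> s \<Longrightarrow> s \<le> t \<Longrightarrow> l s \<le> l t" and lnn: "\<And>s. 0 \<le> l s"
    and lM: "\<And>s. 0 \<le> s \<Longrightarrow> l s \<le> M * s" and M: "M > 0" and \<beta>: "\<beta> \<ge> 1"
    and q: "q > 0" "q \<le> l \<beta> / \<beta>\<^sup>2"
    and z: "z = Inf {s. s \<ge> \<beta> \<and> l s / s\<^sup>2 \<le> q}"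
  shows "z \<ge> \<beta>" "q/4 \<le> l z / z\<^sup>2" "l z / z\<^sup>2 \<le> 4*q" "l \<beta> \<le> l z"
proof -
  define T where "T = {s. s \<ge> \<beta> \<and> l s / s\<^sup>2 \<le> q}"
  define s1 where "s1 = max \<beta> (M/q)"
  have s1: "s1 \<ge> \<beta>" "s1 \<ge> M/q" "s1 > 0" using \<beta> unfolding s1_def by auto
  have "l s1 / s1\<^sup>2 \<le> M * s1 / s1\<^sup>2" using lM[of s1] s1 by (intro divide_right_mono) auto
  also have "\<dots> = M / s1" using s1 by (simp add: power2_eq_square)
  also have "\<dots> \<le> M / (M/q)" using s1 M q by (intro divide_left_mono) auto
  also have "\<dots> = q" using M by simp
  finally have "s1 \<in> T" unfolding T_def using s1 by auto
  then have Tne: "T \<noteq> {}" by auto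
  have Tbdd: "bdd_below T" unfolding T_def by (rule bdd_belowI[of _ \<beta>]) auto
  have zT: "z = Inf T" using z unfolding T_def by simp
  show zb: "z \<ge> \<beta>" unfolding zT using Tne by (intro cInf_greatest) (auto simp: T_def)
  have z0: "z > 0" using zb \<beta> by simp
  show lb: "l \<beta> \<le> l z" using lmono[of \<beta> z] zb \<beta> by simp
  have "Inf T < 2 * z" using z0 zT by simp
  then obtain s where sT: "s \<in> T" and s2: "s < 2*z" using cInf_less_iff[OF Tne Tbdd] by auto
  have sz: "z \<le> s" unfolding zT using sT Tbdd by (rule cInf_lower)
  have "l z / z\<^sup>2 \<le> l s / z\<^sup>2" using lmono[of z s] sz z0 by (intro divide_right_mono) auto
  also have "\<dots> \<le> 4 * (l s / s\<^sup>2)"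
  proof -
    have "s\<^sup>2 \<le> (2*z)\<^sup>2" using s2 sz z0 by (intro power_mono) auto
    then have "s\<^sup>2 \<le> 4 * z\<^sup>2" by (simp add: power_mult_distrib)
    then have "l s * s\<^sup>2 \<le> l s * (4 * z\<^sup>2)" using lnn[of s] by (rule mult_left_mono)
    then show ?thesis using z0 sz by (simp add: field_simps)
  qed
  also have "\<dots> \<le> 4 * q" using sT unfolding T_def by simp
  finally show "l z / z\<^sup>2 \<le> 4*q" .
  show "q/4 \<le> l z / z\<^sup>2"
  proof (cases "z \<ge> 2*\<beta>")
    case True
    define s where "s = z/2"
    have s: "s \<ge> \<beta>" "s < z" "s > 0" using True z0 \<beta> unfolding s_def by auto
    have "s \<notin> T"
    proof
      assume "s \<in> T" then have "z \<le> s" unfolding zT using Tbdd by (rule cInf_lower)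
      then show False using s by simp
    qed
    then have qs: "q < l s / s\<^sup>2" using s unfolding T_def by auto
    have "l s / s\<^sup>2 = 4 * (l s / z\<^sup>2)" unfolding s_def by (simp add: power2_eq_square field_simps)
    also have "\<dots> \<le> 4 * (l z / z\<^sup>2)" using lmono[of s z] s z0 by (simp add: divide_right_mono)
    finally have "q < 4 * (l z / z\<^sup>2)" using qs by linarith
    then show ?thesis by (simp add: mult.commute)
  next
    case False
    have "z\<^sup>2 \<le> (2*\<beta>)\<^sup>2" using False z0 by (intro power_mono) auto
    then have "z\<^sup>2 \<le> 4 * \<beta>\<^sup>2" by (simp add: power_mult_distrib)
    have "q/4 \<le> l \<beta> / \<beta>\<^sup>2 / 4" using q by simp
    also have "\<dots> = l \<beta> / (4 * \<beta>\<^sup>2)" by simp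
    also have "\<dots> \<le> l z / (4 * \<beta>\<^sup>2)" using lb \<beta> by (simp add: divide_right_mono)
    also have "\<dots> \<le> l z / z\<^sup>2" using \<open>z\<^sup>2 \<le> 4 * \<beta>\<^sup>2\<close> z0 lnn[of z] \<beta> by (intro divide_left_mono) auto
    finally show ?thesis .
  qed
qed

lemma clip_diff: "c > 0 \<Longrightarrow> u - clip c u \<le> hh c u * \<bar>u\<bar>"
proof -
  assume c: "c > 0"
  show ?thesis
  proof (cases "\<bar>u\<bar> \<le> c")
    case True
    then have "clip c u = u" unfolding clip_def by (simp add: abs_le_iff max_def min_def)
    then show ?thesis using hh_range[of c u] by simp
  next
    case False
    then have "hh c u = 1" using hh_big[OF c] by simp
    moreover have "u - clip c u \<le> \<bar>u\<bar>" using False c unfolding clip_def by (auto simp: max_def min_def)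
    ultimately show ?thesis by simp
  qed
qed

lemma event_pt:
  fixes Y :: "nat \<Rightarrow> real" and x c L :: real and n :: nat
  assumes x: "x \<ge> 0" and c: "c > 0" and L: "L \<ge> 0"
    and S: "(\<Sum>i=1..n. Y i) \<ge> x * sqrt (\<Sum>i=1..n. (Y i)\<^sup>2)" and Q: "(\<Sum>i=1..n. (Y i)\<^sup>2) \<ge> 9 * L"
  shows "(\<Sum>i=1..n. clip c (Y i)) \<ge> 3/2 * x * sqrt L \<or> (\<Sum>i=1..n. hh c (Y i)) \<ge> x\<^sup>2/4"
proof (rule disjCI)
  assume N: "\<not> (\<Sum>i=1..n. hh c (Y i)) \<ge> x\<^sup>2/4"
  let ?Q = "\<Sum>i=1..n. (Y i)\<^sup>2" and ?N = "\<Sum>i=1..n. hh c (Y i)"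
  have "(\<Sum>i=1..n. Y i) - (\<Sum>i=1..n. clip c (Y i)) = (\<Sum>i=1..n. Y i - clip c (Y i))"
    by (simp add: sum_subtractf)
  also have "\<dots> \<le> (\<Sum>i=1..n. hh c (Y i) * \<bar>Y i\<bar>)" by (intro sum_mono clip_diff[OF c])
  also have "\<dots> \<le> sqrt ?N * sqrt ?Q"
  proof -
    have cs: "(\<Sum>i=1..n. hh c (Y i) * \<bar>Y i\<bar>)\<^sup>2 \<le> (\<Sum>i=1..n. (hh c (Y i))\<^sup>2) * (\<Sum>i=1..n. \<bar>Y i\<bar>\<^sup>2)"
      by (rule Cauchy_Schwarz_ineq_sum)
    have "(\<Sum>i=1..n. (hh c (Y i))\<^sup>2) \<le> ?N"
      by (intro sum_mono) (use hh_range in \<open>auto simp: power2_eq_square mult_left_le\<close>)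
    moreover have Q0: "0 \<le> ?Q" by (intro sum_nonneg) auto
    ultimately have "(\<Sum>i=1..n. (hh c (Y i))\<^sup>2) * ?Q \<le> ?N * ?Q" by (rule mult_right_mono)
    then have "(\<Sum>i=1..n. hh c (Y i) * \<bar>Y i\<bar>)\<^sup>2 \<le> ?N * ?Q"
      using cs by simp
    then have "sqrt ((\<Sum>i=1..n. hh c (Y i) * \<bar>Y i\<bar>)\<^sup>2) \<le> sqrt (?N * ?Q)" by (rule real_sqrt_le_mono)
    moreover have "(\<Sum>i=1..n. hh c (Y i) * \<bar>Y i\<bar>) \<le> sqrt ((\<Sum>i=1..n. hh c (Y i) * \<bar>Y i\<bar>)\<^sup>2)" by simp
    ultimately show ?thesis by (simp add: real_sqrt_mult)
  qed
  also have "\<dots> \<le> x/2 * sqrt ?Q"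
  proof (rule mult_right_mono)
    have "?N \<le> (x/2)\<^sup>2" using N by (simp add: power_divide)
    then have "sqrt ?N \<le> sqrt ((x/2)\<^sup>2)" by (rule real_sqrt_le_mono)
    then show "sqrt ?N \<le> x/2" using x by simp
  qed (simp add: sum_nonneg)
  finally have "(\<Sum>i=1..n. clip c (Y i)) \<ge> (\<Sum>i=1..n. Y i) - x/2 * sqrt ?Q" by simp
  moreover have "sqrt ?Q \<ge> 3 * sqrt L"
  proof -
    have "sqrt ?Q \<ge> sqrt (9 * L)" using Q by (rule real_sqrt_le_mono)
    moreover have "sqrt (9 * L) = 3 * sqrt L" by (simp add: real_sqrt_mult)
    ultimately show ?thesis by simp
  qed
  ultimately have "(\<Sum>i=1..n. clip c (Y i)) \<ge> x/2 * sqrt ?Q" using S by (simp add: algebra_simps)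
  moreover have "x/2 * sqrt ?Q \<ge> x/2 * (3 * sqrt L)" using \<open>sqrt ?Q \<ge> 3 * sqrt L\<close> x by (intro mult_left_mono) auto
  ultimately show "(\<Sum>i=1..n. clip c (Y i)) \<ge> 3/2 * x * sqrt L" by simp
qed



lemma num1:
  fixes x z L lc lz la c \<eta> :: real and n :: nat
  assumes x: "x > 0" and z: "z > 0" and L: "L > 0" and Lu: "sqrt L \<le> 2*x*z" and Ll: "x*z/2 \<le> sqrt L"
    and lc: "lc \<le> lz" "0 \<le> lc" and nL: "real n * lz = L" and la: "la = 3/2 * x / sqrt L" and c: "c = z/100"
    and eta: "\<eta> = 1/10^12"
  shows "- (la * (3/2 * x * sqrt L)) + real n * (la * (4 * \<eta> * lc / c) + (la\<^sup>2 / 2 * exp (la * c)) * lc)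
           \<le> - (109/100) * x\<^sup>2"
proof -
  have sL: "sqrt L > 0" using L by simp
  have la0: "la \<ge> 0" using la x sL by simp
  have lz0: "lz \<ge> 0" using lc by linarith
  have A: "la * (3/2 * x * sqrt L) = 9/4 * x\<^sup>2" using la sL by (simp add: power2_eq_square field_simps)
  have lac: "la * c \<le> 3/100"
  proof -
    have "la * c = 3/200 * (x * z) / sqrt L" using sL unfolding la c by (simp add: field_simps)
    also have "\<dots> \<le> 3/200 * (x * z) / (x*z/2)" using Ll x z sL by (intro divide_left_mono) auto
    also have "\<dots> = 3/100" using x z by simp
    finally show ?thesis .
  qed
  have ex: "exp (la * c) \<le> 10309/10000"
  proof -
    have "exp (la * c) \<le> exp (3/100)" using lac by simp
    also have "\<dots> \<le> 1 + 3/100 + (3/100)\<^sup>2" by (rule exp_bound) auto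
    finally show ?thesis by (simp add: power2_eq_square)
  qed
  have B: "real n * ((la\<^sup>2 / 2 * exp (la * c)) * lc) \<le> 10309/10000 * (9/8 * x\<^sup>2)"
  proof -
    have "real n * ((la\<^sup>2 / 2 * exp (la * c)) * lc) = exp (la * c) * (la\<^sup>2 / 2 * (real n * lc))"
      by (simp add: algebra_simps)
    also have "\<dots> \<le> exp (la * c) * (la\<^sup>2 / 2 * (real n * lz))"
      using lc by (intro mult_left_mono) (auto intro: mult_left_mono)
    also have "la\<^sup>2 / 2 * (real n * lz) = 9/8 * x\<^sup>2"
    proof -
      have las: "la * sqrt L = 3/2 * x" using sL unfolding la by simp
      have "la\<^sup>2 * L = (la * sqrt L)\<^sup>2" using L by (simp add: power_mult_distrib)
      also have "\<dots> = 9/4 * x\<^sup>2" unfolding las by (simp add: power_mult_distrib power2_eq_square)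
      finally show ?thesis unfolding nL by (simp add: mult.commute)
    qed
    also have "exp (la * c) * (9/8 * x\<^sup>2) \<le> 10309/10000 * (9/8 * x\<^sup>2)"
      using ex by (intro mult_right_mono) auto
    finally show ?thesis .
  qed
  have C: "real n * (la * (4 * \<eta> * lc / c)) \<le> 1200 * \<eta> * x\<^sup>2"
  proof -
    have "real n * (la * (4 * \<eta> * lc / c)) = 400 * \<eta> * la * (real n * lc) / z"
      using c z by (simp add: field_simps)
    also have "\<dots> \<le> 400 * \<eta> * la * (real n * lz) / z"
      using lc la0 eta z by (intro divide_right_mono mult_left_mono) auto
    also have "400 * \<eta> * la * (real n * lz) / z = 600 * \<eta> * x * sqrt L / z"
    proof -
      have LL: "L = sqrt L * sqrt L" using L by simp
      have "la * (real n * lz) = 3/2 * x * sqrt L" unfolding nL la using sL by (subst LL) (simp add: field_simps)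
      then show ?thesis by (simp add: field_simps)
    qed
    also have "\<dots> \<le> 600 * \<eta> * x * (2*x*z) / z"
      using Lu eta x z by (intro divide_right_mono mult_left_mono) auto
    also have "\<dots> = 1200 * \<eta> * x\<^sup>2" using z by (simp add: power2_eq_square)
    finally show ?thesis .
  qed
  have "- (la * (3/2 * x * sqrt L)) + real n * (la * (4 * \<eta> * lc / c) + (la\<^sup>2 / 2 * exp (la * c)) * lc)
     = - (9/4 * x\<^sup>2) + real n * (la * (4 * \<eta> * lc / c)) + real n * ((la\<^sup>2 / 2 * exp (la * c)) * lc)"
    using A by (simp add: algebra_simps)
  also have "\<dots> \<le> - (9/4 * x\<^sup>2) + 1200 * \<eta> * x\<^sup>2 + 10309/10000 * (9/8 * x\<^sup>2)" using B C by linarith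
  also have "\<dots> \<le> - (109/100) * x\<^sup>2"
  proof -
    have "1200 * \<eta> \<le> 1/10000" using eta by simp
    then have "1200 * \<eta> * x\<^sup>2 \<le> 1/10000 * x\<^sup>2" by (intro mult_right_mono) auto
    moreover have "0 \<le> x\<^sup>2" by simp
    ultimately show ?thesis by linarith
  qed
  finally show ?thesis .
qed

lemma num2:
  fixes x z lz lc2 c p \<eta> :: real and n :: nat
  assumes x: "x > 0" and z: "z > 0" and n: "n \<ge> 1" and lz: "lz / z\<^sup>2 \<le> 4 * (x\<^sup>2 / real n)"
    and lc: "lc2 \<le> lz" "0 \<le> lc2" and c: "c = z/100" and p: "p = \<eta> * (lc2 / (c/2)\<^sup>2)"
    and eta: "\<eta> = 1/10^12"
  shows "- (8 * x\<^sup>2 / 4) + real n * ((exp 8 - 1) * p) \<le> - (199/100) * x\<^sup>2"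
proof -
  have e8: "exp (8::real) \<le> 6561"
  proof -
    have "exp (8::real) = exp 1 ^ 8" using exp_of_nat_mult[of 8 1] by simp
    also have "\<dots> \<le> 3 ^ 8" using exp_le by (intro power_mono) auto
    finally show ?thesis by simp
  qed
  have "p = 40000 * \<eta> * (lc2 / z\<^sup>2)" using p c by (simp add: power2_eq_square field_simps)
  also have "\<dots> \<le> 40000 * \<eta> * (lz / z\<^sup>2)" using lc eta z by (intro mult_left_mono divide_right_mono) auto
  also have "\<dots> \<le> 40000 * \<eta> * (4 * (x\<^sup>2 / real n))" using lz eta by (intro mult_left_mono) auto
  finally have pb: "p \<le> 160000 * \<eta> * x\<^sup>2 / real n" by simp
  have p0: "p \<ge> 0" using p lc eta by simp
  have "real n * ((exp 8 - 1) * p) \<le> real n * (6561 * (160000 * \<eta> * x\<^sup>2 / real n))"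
    using pb p0 e8 by (intro mult_left_mono mult_mono) auto
  also have "\<dots> = 6561 * 160000 * \<eta> * x\<^sup>2" using n by simp
  finally have f: "real n * ((exp 8 - 1) * p) \<le> 6561 * 160000 * \<eta> * x\<^sup>2" .
  have "6561 * 160000 * \<eta> \<le> 1/100" using eta by simp
  then have "6561 * 160000 * \<eta> * x\<^sup>2 \<le> 1/100 * x\<^sup>2" by (intro mult_right_mono) auto
  then show ?thesis using f by linarith
qed

lemma num3:
  fixes x :: real assumes x: "x \<ge> 3"
  shows "exp (- (109/100) * x\<^sup>2) + exp (- (199/100) * x\<^sup>2) \<le> exp (- x\<^sup>2)"
proof -
  have "(3::real)\<^sup>2 \<le> x\<^sup>2" using x by (intro power_mono) auto
  then have x2: "x\<^sup>2 \<ge> 9" by simp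
  have "exp (- (199/100) * x\<^sup>2) \<le> exp (- (109/100) * x\<^sup>2)" using x2 by simp
  then have "exp (- (109/100) * x\<^sup>2) + exp (- (199/100) * x\<^sup>2) \<le> 2 * exp (- (109/100) * x\<^sup>2)" by simp
  also have "2 \<le> exp (9/100 * x\<^sup>2)"
  proof -
    have "1 + 81/100 + (81/100)\<^sup>2 / 2 \<le> exp (81/100::real)" by (rule exp_lower_Taylor_quadratic) auto
    then have a: "2 \<le> exp (81/100::real)" by (simp add: power2_eq_square)
    have "exp (81/100::real) \<le> exp (9/100 * x\<^sup>2)" using x2 by simp
    with a show ?thesis by linarith
  qed
  then have "2 * exp (- (109/100) * x\<^sup>2) \<le> exp (9/100 * x\<^sup>2) * exp (- (109/100) * x\<^sup>2)" by simp
  also have "\<dots> = exp (- x\<^sup>2)" by (simp flip: exp_add)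
  finally show ?thesis by simp
qed



context setting begin

lemma main_n:
  fixes Xs :: "nat \<Rightarrow> 'w \<Rightarrow> real" and n :: nat and x z sz \<eta> :: real
  assumes XsH: "\<And>n. n \<ge> 1 \<Longrightarrow> Xs n \<in> H"
    and indep: "\<And>i. i \<ge> 1 \<Longrightarrow> indep_of H E (Xs (i + 1)) (map Xs [1..<i+1])"
    and ident: "\<And>n. n \<ge> 1 \<Longrightarrow> same_distr E (Xs n) X"
    and cap: "\<And>s. s \<ge> sz \<Longrightarrow> capV H E {w. s \<le> \<bar>X w\<bar>} \<le> ereal (\<eta> * (l s / s\<^sup>2))"
    and eta: "\<eta> = 1/10^12" and Dlim: "(D \<longlongrightarrow> 0) at_top"
    and n: "n \<ge> 1" and x: "x \<ge> 3" and z: "z > 0" and lz: "l z > 0"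
    and zq: "(x\<^sup>2 / real n) / 4 \<le> l z / z\<^sup>2" "l z / z\<^sup>2 \<le> 4 * (x\<^sup>2 / real n)"
    and zs: "z / 100 / 2 \<ge> sz" and sz: "sz > 0"
  shows "capV H E {w. (\<Sum>i=1..n. Xs i w) \<ge> x * sqrt (\<Sum>i=1..n. (Xs i w)\<^sup>2) \<and>
                   (\<Sum>i=1..n. (Xs i w)\<^sup>2) \<ge> 9 * real n * l z} \<le> ereal (exp (- x\<^sup>2))"
proof -
  define c where "c = z / 100"
  define L where "L = real n * l z"
  define la where "la = 3/2 * x / sqrt L"
  define A where "A = {w. (\<Sum>i=1..n. Xs i w) \<ge> x * sqrt (\<Sum>i=1..n. (Xs i w)\<^sup>2) \<and>
                   (\<Sum>i=1..n. (Xs i w)\<^sup>2) \<ge> 9 * real n * l z}"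
  have x0: "x > 0" using x by simp
  have n0: "real n > 0" using n by simp
  have L0: "L > 0" unfolding L_def using n0 lz by simp
  have sL: "sqrt L > 0" using L0 by simp
  have c0: "c > 0" unfolding c_def using z by simp
  have csz: "c \<ge> sz" "c/2 \<ge> sz" using zs sz unfolding c_def by auto
  have cz: "c \<le> z" "c/2 \<le> z" unfolding c_def using z by auto
  have eta0: "\<eta> > 0" "\<eta> \<le> 1/6" using eta by auto
  have la0: "la \<ge> 0" unfolding la_def using x0 sL by simp
  have Llow: "x * z / 2 \<le> sqrt L"
  proof -
    have "l z \<ge> (x\<^sup>2 / real n) / 4 * z\<^sup>2" using zq(1) z by (simp add: field_simps)
    then have "real n * l z \<ge> real n * ((x\<^sup>2 / real n) / 4 * z\<^sup>2)" using n0 by (intro mult_left_mono) auto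
    also have "real n * ((x\<^sup>2 / real n) / 4 * z\<^sup>2) = (x * z / 2)\<^sup>2" using n0 by (simp add: power2_eq_square field_simps)
    finally have "(x * z / 2)\<^sup>2 \<le> L" unfolding L_def .
    then have "sqrt ((x * z / 2)\<^sup>2) \<le> sqrt L" by (rule real_sqrt_le_mono)
    then show ?thesis using x0 z by simp
  qed
  have Lup: "sqrt L \<le> 2 * x * z"
  proof -
    have "l z \<le> 4 * (x\<^sup>2 / real n) * z\<^sup>2" using zq(2) z by (simp add: field_simps)
    then have "real n * l z \<le> real n * (4 * (x\<^sup>2 / real n) * z\<^sup>2)" using n0 by (intro mult_left_mono) auto
    also have "real n * (4 * (x\<^sup>2 / real n) * z\<^sup>2) = (2 * x * z)\<^sup>2" using n0 by (simp add: power2_eq_square field_simps)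
    finally have "L \<le> (2 * x * z)\<^sup>2" unfolding L_def .
    then have "sqrt L \<le> sqrt ((2 * x * z)\<^sup>2)" by (rule real_sqrt_le_mono)
    then show ?thesis using x0 z by simp
  qed
  have lc: "l c \<le> l z" "0 \<le> l c" using l_mono[of c z] cz c0 z lE(2)[of c] by auto
  have lc2: "l (c/2) \<le> l z" "0 \<le> l (c/2)" using l_mono[of "c/2" z] cz c0 z lE(2)[of "c/2"] by auto
  define a1 where "a1 = la * (4 * \<eta> * l c / c) + (la\<^sup>2 / 2 * exp (la * c)) * l c"
  define p where "p = \<eta> * (l (c/2) / (c/2)\<^sup>2)"
  define a2 where "a2 = (exp 8 - 1) * p"
  have Dc: "D c \<le> ereal (4 * \<eta> * l c / c)" by (rule Dbound[OF cap csz(1) c0 eta0 Dlim])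
  have Eg1: "E (\<lambda>w. exp (la * clip c (X w))) \<le> ereal (1 + a1)"
    using E_g1[OF c0 la0 Dc] unfolding a1_def by (simp add: add.assoc)
  have capc: "capV H E {w. c/2 \<le> \<bar>X w\<bar>} \<le> ereal p" unfolding p_def by (rule cap[OF csz(2)])
  have Eg2: "E (\<lambda>w. exp (8 * hh c (X w))) \<le> ereal (1 + a2)"
    using E_g2[OF c0 _ capc, of 8] unfolding a2_def by simp
  define B1 where "B1 = exp (la * c)"
  have B1: "1 \<le> B1" unfolding B1_def using la0 c0 by simp
  have g1b: "\<And>u. 0 \<le> exp (la * clip c u)" "\<And>u. exp (la * clip c u) \<le> B1"
    unfolding B1_def using clip_abs[of c] c0 la0 by (auto simp: abs_le_iff mult_left_mono)
  have g1L: "\<And>a b. \<bar>exp (la * clip c a) - exp (la * clip c b)\<bar> \<le> (exp (la * c) * la) * \<bar>a - b\<bar>"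
    by (rule g1_lip[OF c0 la0])
  have K1: "exp (la * c) * la \<ge> 0" using la0 by simp
  have g1H: "(\<lambda>w. exp (la * clip c (X w))) \<in> H" by (rule fH[OF g1L])
  define e1 where "e1 = real_of_ereal (E (\<lambda>w. exp (la * clip c (X w))))"
  have e1: "E (\<lambda>w. exp (la * clip c (X w))) = ereal e1"
    unfolding e1_def by (rule E_finite[OF S g1H g1b])
  have e1b: "0 \<le> e1" "e1 \<le> 1 + a1" using E_bounds[OF S g1H g1b] e1 Eg1 by auto
  define B2 where "B2 = exp (8::real)"
  have B2: "1 \<le> B2" unfolding B2_def by simp
  have g2b: "\<And>u. 0 \<le> exp (8 * hh c u)" "\<And>u. exp (8 * hh c u) \<le> B2"
    unfolding B2_def using hh_range by auto
  have g2L: "\<And>a b. \<bar>exp (8 * hh c a) - exp (8 * hh c b)\<bar> \<le> (exp 8 * (8 * (2/c))) * \<bar>a - b\<bar>"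
    by (rule g2_lip[OF c0]) simp
  have K2: "exp 8 * (8 * (2/c)) \<ge> 0" using c0 by simp
  have g2H: "(\<lambda>w. exp (8 * hh c (X w))) \<in> H" by (rule fH[OF g2L])
  define e2 where "e2 = real_of_ereal (E (\<lambda>w. exp (8 * hh c (X w))))"
  have e2: "E (\<lambda>w. exp (8 * hh c (X w))) = ereal e2"
    unfolding e2_def by (rule E_finite[OF S g2H g2b])
  have e2b: "0 \<le> e2" "e2 \<le> 1 + a2" using E_bounds[OF S g2H g2b] e2 Eg2 by auto
  define P1 where "P1 = (\<lambda>w. \<Prod>i\<in>{1..n}. exp (la * clip c (Xs i w)))"
  define P2 where "P2 = (\<lambda>w. \<Prod>i\<in>{1..n}. exp (8 * hh c (Xs i w)))"
  have P1H: "P1 \<in> H" unfolding P1_def by (rule prod_H[where g="\<lambda>u. exp (la * clip c u)", OF S XsH g1b B1 g1L K1])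
  have P2H: "P2 \<in> H" unfolding P2_def by (rule prod_H[where g="\<lambda>u. exp (8 * hh c u)", OF S XsH g2b B2 g2L K2])
  have EP1: "E P1 = ereal (e1 ^ n)" unfolding P1_def
    by (rule prod_E[where g="\<lambda>u. exp (la * clip c u)", OF S XsH XH indep ident g1b B1 g1L K1 e1])
  have EP2: "E P2 = ereal (e2 ^ n)" unfolding P2_def
    by (rule prod_E[where g="\<lambda>u. exp (8 * hh c u)", OF S XsH XH indep ident g2b B2 g2L K2 e2])
  define k1 where "k1 = exp (- (la * (3/2 * x * sqrt L)))"
  define k2 where "k2 = exp (- (8 * x\<^sup>2 / 4))"
  define \<xi> where "\<xi> = (\<lambda>w. k1 * P1 w + k2 * P2 w)"
  have \<xi>H: "\<xi> \<in> H" unfolding \<xi>_def by (rule sl_add[OF S sl_smul[OF S P1H] sl_smul[OF S P2H]])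
  have P1eq: "\<And>w. P1 w = exp (la * (\<Sum>i=1..n. clip c (Xs i w)))"
    unfolding P1_def by (simp add: exp_sum sum_distrib_left)
  have P2eq: "\<And>w. P2 w = exp (8 * (\<Sum>i=1..n. hh c (Xs i w)))"
    unfolding P2_def by (simp add: exp_sum sum_distrib_left)
  have ind: "\<And>w. indicator A w \<le> \<xi> w"
  proof -
    fix w
    have t1: "0 \<le> k1 * P1 w" "0 \<le> k2 * P2 w" unfolding k1_def k2_def P1eq P2eq by auto
    show "indicator A w \<le> \<xi> w"
    proof (cases "w \<in> A")
      case False then show ?thesis using t1 unfolding \<xi>_def by simp
    next
      case True
      then have S1: "(\<Sum>i=1..n. Xs i w) \<ge> x * sqrt (\<Sum>i=1..n. (Xs i w)\<^sup>2)"
        and S2: "(\<Sum>i=1..n. (Xs i w)\<^sup>2) \<ge> 9 * L" unfolding A_def L_def by (auto simp: mult.assoc)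
      have "(\<Sum>i=1..n. clip c (Xs i w)) \<ge> 3/2 * x * sqrt L \<or> (\<Sum>i=1..n. hh c (Xs i w)) \<ge> x\<^sup>2/4"
        by (rule event_pt[OF _ c0 _ S1 S2]) (use x0 L0 in auto)
      then have "1 \<le> k1 * P1 w \<or> 1 \<le> k2 * P2 w"
      proof
        assume h: "(\<Sum>i=1..n. clip c (Xs i w)) \<ge> 3/2 * x * sqrt L"
        have "k1 * P1 w = exp (la * (\<Sum>i=1..n. clip c (Xs i w)) - la * (3/2 * x * sqrt L))"
          unfolding k1_def P1eq by (subst exp_add[symmetric]) simp
        also have "\<dots> \<ge> 1"
        proof -
          have "la * (3/2 * x * sqrt L) \<le> la * (\<Sum>i=1..n. clip c (Xs i w))" using h la0 by (rule mult_left_mono)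
          then show ?thesis by simp
        qed
        finally show ?thesis by simp
      next
        assume h: "(\<Sum>i=1..n. hh c (Xs i w)) \<ge> x\<^sup>2/4"
        have "k2 * P2 w = exp (8 * (\<Sum>i=1..n. hh c (Xs i w)) - 8 * x\<^sup>2 / 4)"
          unfolding k2_def P2eq by (simp add: exp_diff exp_minus field_simps)
        also have "\<dots> \<ge> 1" using h by simp
        finally show ?thesis by simp
      qed
      then show ?thesis using True t1 unfolding \<xi>_def by auto
    qed
  qed
  have k0: "k1 \<ge> 0" "k2 \<ge> 0" unfolding k1_def k2_def by auto
  have E1: "E (\<lambda>w. k1 * P1 w) = ereal (k1 * e1 ^ n)" using sl_hom[OF S P1H k0(1)] EP1 by simp
  have E2: "E (\<lambda>w. k2 * P2 w) = ereal (k2 * e2 ^ n)" using sl_hom[OF S P2H k0(2)] EP2 by simp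
  have "capV H E A \<le> E \<xi>" by (rule capV_le[OF \<xi>H ind])
  also have "E \<xi> \<le> ereal (k1 * e1 ^ n + k2 * e2 ^ n)" unfolding \<xi>_def
    by (rule Eadd[OF sl_smul[OF S P1H] sl_smul[OF S P2H]]) (use E1 E2 in auto)
  also have "k1 * e1 ^ n + k2 * e2 ^ n \<le> exp (- (109/100) * x\<^sup>2) + exp (- (199/100) * x\<^sup>2)"
  proof (rule add_mono)
    have "1 + a1 \<le> exp a1" by (rule exp_ge_add_one_self)
    then have "e1 \<le> exp a1" using e1b by linarith
    then have "e1 ^ n \<le> exp a1 ^ n" using e1b by (intro power_mono) auto
    also have "\<dots> = exp (real n * a1)" by (simp add: exp_of_nat_mult)
    finally have "k1 * e1 ^ n \<le> k1 * exp (real n * a1)" using k0 by (intro mult_left_mono) auto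
    also have "\<dots> = exp (- (la * (3/2 * x * sqrt L)) + real n * a1)" unfolding k1_def by (subst exp_add) simp
    also have "\<dots> \<le> exp (- (109/100) * x\<^sup>2)"
      unfolding a1_def exp_le_cancel_iff
      by (rule num1[OF x0 z L0 Lup Llow lc _ la_def c_def eta]) (simp add: L_def)
    finally show "k1 * e1 ^ n \<le> exp (- (109/100) * x\<^sup>2)" .
    have "1 + a2 \<le> exp a2" by (rule exp_ge_add_one_self)
    then have "e2 \<le> exp a2" using e2b by linarith
    then have "e2 ^ n \<le> exp a2 ^ n" using e2b by (intro power_mono) auto
    also have "\<dots> = exp (real n * a2)" by (simp add: exp_of_nat_mult)
    finally have "k2 * e2 ^ n \<le> k2 * exp (real n * a2)" using k0 by (intro mult_left_mono) auto
    also have "\<dots> = exp (- (8 * x\<^sup>2 / 4) + real n * a2)" unfolding k2_def by (subst exp_add) simp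
    also have "\<dots> \<le> exp (- (199/100) * x\<^sup>2)"
      unfolding a2_def exp_le_cancel_iff
      by (rule num2[OF x0 z n zq(2) lc2 c_def p_def eta])
    finally show "k2 * e2 ^ n \<le> exp (- (199/100) * x\<^sup>2)" .
  qed
  also have "\<dots> \<le> exp (- x\<^sup>2)" by (rule num3[OF x])
  finally show ?thesis unfolding A_def by simp
qed

end


theorem proposition4p1:
  fixes H :: "('w \<Rightarrow> real) set" and E :: "('w \<Rightarrow> real) \<Rightarrow> ereal"
    and X :: "'w \<Rightarrow> real" and Xs :: "nat \<Rightarrow> 'w \<Rightarrow> real" and x :: "nat \<Rightarrow> real"
    and l :: "real \<Rightarrow> real" and b0 :: real and z :: "nat \<Rightarrow> real"
  assumes space: "sublinear_expectation_space H E"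
    and XH: "X \<in> H" and XsH: "\<And>n. n \<ge> 1 \<Longrightarrow> Xs n \<in> H"
    and indep: "\<And>i. i \<ge> 1 \<Longrightarrow> indep_of H E (Xs (i + 1)) (map Xs [1..<i+1])"
    and ident: "\<And>n. n \<ge> 1 \<Longrightarrow> same_distr E (Xs n) X"
    and mean0: "E X = 0" "lowerE E X = 0"
    and l_def: "\<And>t. l t = real_of_ereal (E (\<lambda>w. min ((X w)\<^sup>2) (t\<^sup>2)))"
    and condI: "\<And>\<epsilon>. \<epsilon> > 0 \<Longrightarrow>
        \<forall>\<^sub>F t in at_top. capV H E {w. \<bar>X w\<bar> \<ge> t} \<le> ereal (\<epsilon> * (l t / t\<^sup>2))"
    and condII: "\<exists>C::real. \<forall>\<^sub>F t in at_top.
        0 < lowerE E (\<lambda>w. min ((X w)\<^sup>2) (t\<^sup>2)) \<and>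
        E (\<lambda>w. min ((X w)\<^sup>2) (t\<^sup>2)) \<le> ereal C * lowerE E (\<lambda>w. min ((X w)\<^sup>2) (t\<^sup>2))"
    and condIII: "((\<lambda>c. E (\<lambda>w. max (\<bar>X w\<bar> - c) 0)) \<longlongrightarrow> 0) at_top"
    and condIV: "filterlim x at_top sequentially" "(\<lambda>n. x n / sqrt (real n)) \<longlonglongrightarrow> 0"
    and b0_def: "b0 = Inf {t. t \<ge> 0 \<and> l t > 0}"
    and z_def: "\<And>n. z n = Inf {s. s \<ge> b0 + 1 \<and> l s / s\<^sup>2 \<le> (x n)\<^sup>2 / real n}"
  shows "\<exists>r :: nat \<Rightarrow> real. r \<longlonglongrightarrow> 0 \<and>
    (\<forall>\<^sub>F n in sequentially.
      capV H E {w. (\<Sum>i=1..n. Xs i w) \<ge> x n * sqrt (\<Sum>i=1..n. (Xs i w)\<^sup>2) \<and>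
                   (\<Sum>i=1..n. (Xs i w)\<^sup>2) \<ge> 9 * real n * l (z n)}
      \<le> ereal (exp (- (x n)\<^sup>2 + r n * (x n)\<^sup>2)))"
proof -
  interpret setting H E X l
    by unfold_locales (rule space XH mean0(1) l_def)+
  have Dlim: "(D \<longlongrightarrow> 0) at_top"
  proof -
    have "D = (\<lambda>c. E (\<lambda>w. max (\<bar>X w\<bar> - c) 0))" by (rule ext) (simp add: D_def)
    then show ?thesis using condIII by simp
  qed
  define \<eta> :: real where "\<eta> = 1/10^12"
  have "\<forall>\<^sub>F t in at_top. capV H E {w. \<bar>X w\<bar> \<ge> t} \<le> ereal (\<eta> * (l t / t\<^sup>2))"
    by (rule condI) (simp add: \<eta>_def)
  then obtain s1 where s1: "\<And>t. t \<ge> s1 \<Longrightarrow> capV H E {w. t \<le> \<bar>X w\<bar>} \<le> ereal (\<eta> * (l t / t\<^sup>2))"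
    by (auto simp: eventually_at_top_linorder)
  define sz where "sz = max s1 1"
  have sz: "sz > 0" unfolding sz_def by simp
  have cap: "\<And>s. s \<ge> sz \<Longrightarrow> capV H E {w. s \<le> \<bar>X w\<bar>} \<le> ereal (\<eta> * (l s / s\<^sup>2))"
    using s1 unfolding sz_def by simp
  have "eventually (\<lambda>c. D c < ereal 1) at_top"
    using order_tendstoD(2)[OF Dlim, of "ereal 1"] by (simp add: zero_ereal_def)
  then obtain c0 where c0: "\<And>c. c \<ge> c0 \<Longrightarrow> D c < ereal 1" by (auto simp: eventually_at_top_linorder)
  define c1 where "c1 = max c0 0"
  have c1: "c1 \<ge> 0" "D c1 \<le> ereal 1" using c0[of c1] unfolding c1_def by auto
  define M where "M = c1 + 1"
  have M0: "M > 0" unfolding M_def using c1 by simp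
  have lM: "\<And>s. 0 \<le> s \<Longrightarrow> l s \<le> M * s"
  proof -
    fix s :: real assume s: "0 \<le> s"
    have FH: "(\<lambda>w. c1 + max (\<bar>X w\<bar> - c1) 0) \<in> H" by (rule sl_add[OF S sl_const[OF S] DH])
    have EF: "E (\<lambda>w. c1 + max (\<bar>X w\<bar> - c1) 0) \<le> ereal (c1 + 1)"
      by (rule Eadd[OF sl_const[OF S] DH]) (use sl_constE[OF S] c1 in \<open>auto simp: D_def\<close>)
    have EsF: "E (\<lambda>w. s * (c1 + max (\<bar>X w\<bar> - c1) 0)) \<le> ereal (s * (c1 + 1))"
      by (rule Escale[OF FH s EF])
    have pt: "\<And>w. min ((X w)\<^sup>2) (s\<^sup>2) \<le> s * (c1 + max (\<bar>X w\<bar> - c1) 0)"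
    proof -
      fix w
      have m: "min ((X w)\<^sup>2) (s\<^sup>2) \<le> s * \<bar>X w\<bar>"
      proof (cases "\<bar>X w\<bar> \<le> s")
        case True
        then have "\<bar>X w\<bar> * \<bar>X w\<bar> \<le> s * \<bar>X w\<bar>" by (intro mult_right_mono) auto
        then show ?thesis by (simp add: power2_eq_square min_def abs_mult[symmetric])
      next
        case False
        then have "s * s \<le> s * \<bar>X w\<bar>" using s by (intro mult_left_mono) auto
        then show ?thesis by (simp add: power2_eq_square min_def)
      qed
      have "s * \<bar>X w\<bar> \<le> s * (c1 + max (\<bar>X w\<bar> - c1) 0)" using s by (intro mult_left_mono) auto
      with m show "min ((X w)\<^sup>2) (s\<^sup>2) \<le> s * (c1 + max (\<bar>X w\<bar> - c1) 0)" by linarith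
    qed
    have "E (\<lambda>w. min ((X w)\<^sup>2) (s\<^sup>2)) \<le> ereal (s * (c1 + 1))"
      by (rule Emono[OF lH sl_smul[OF S FH] pt EsF])
    then show "l s \<le> M * s" using lE(1)[of s] unfolding M_def by (simp add: mult.commute)
  qed
  obtain C where "\<forall>\<^sub>F t in at_top. 0 < lowerE E (\<lambda>w. min ((X w)\<^sup>2) (t\<^sup>2)) \<and>
        E (\<lambda>w. min ((X w)\<^sup>2) (t\<^sup>2)) \<le> ereal C * lowerE E (\<lambda>w. min ((X w)\<^sup>2) (t\<^sup>2))"
    using condII by blast
  then obtain t0 where t0: "\<And>t. t \<ge> t0 \<Longrightarrow> 0 < lowerE E (\<lambda>w. min ((X w)\<^sup>2) (t\<^sup>2))"
    by (auto simp: eventually_at_top_linorder)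
  define t1 where "t1 = max t0 0"
  have t1: "t1 \<ge> 0" "0 < lowerE E (\<lambda>w. min ((X w)\<^sup>2) (t1\<^sup>2))" using t0[of t1] unfolding t1_def by auto
  have lt1: "l t1 > 0"
  proof -
    let ?Z = "\<lambda>w. min ((X w)\<^sup>2) (t1\<^sup>2)"
    have mZH: "(\<lambda>w. - ?Z w) \<in> H" using sl_smul[OF S lH, of "-1" t1] by simp
    have b: "\<And>w. - (t1\<^sup>2) \<le> - ?Z w" "\<And>w. - ?Z w \<le> 0" by auto
    define m where "m = real_of_ereal (E (\<lambda>w. - ?Z w))"
    have m: "E (\<lambda>w. - ?Z w) = ereal m" unfolding m_def by (rule E_finite[OF S mZH b])
    have "m < 0" using t1(2) m unfolding lowerE_def by simp
    have "E (\<lambda>w. ?Z w + - ?Z w) \<le> E ?Z + E (\<lambda>w. - ?Z w)" by (rule sl_subadd[OF S lH mZH])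
    moreover have "E (\<lambda>w. ?Z w + - ?Z w) = 0" using sl_constE[OF S, of 0] by (simp add: zero_ereal_def)
    ultimately have "0 \<le> l t1 + m" using lE(1)[of t1] m by simp
    then show ?thesis using \<open>m < 0\<close> by linarith
  qed
  define Bs where "Bs = {t. t \<ge> 0 \<and> l t > 0}"
  have Bne: "Bs \<noteq> {}" using t1 lt1 unfolding Bs_def by auto
  have Bbdd: "bdd_below Bs" unfolding Bs_def by (rule bdd_belowI[of _ 0]) auto
  have b00: "b0 \<ge> 0" unfolding b0_def using Bne by (intro cInf_greatest) (auto simp: Bs_def)
  have "Inf Bs < b0 + 1" unfolding b0_def Bs_def by simp
  then obtain tb where tb: "tb \<in> Bs" "tb < b0 + 1" using cInf_less_iff[OF Bne Bbdd] by auto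
  define \<beta> where "\<beta> = b0 + 1"
  have \<beta>1: "\<beta> \<ge> 1" unfolding \<beta>_def using b00 by simp
  have l\<beta>: "l \<beta> > 0"
  proof -
    have "l tb \<le> l \<beta>" using tb b00 unfolding \<beta>_def Bs_def by (intro l_mono) auto
    then show ?thesis using tb unfolding Bs_def by auto
  qed
  define qs where "qs = min (l \<beta> / \<beta>\<^sup>2) (l \<beta> / (4 * (200 * sz)\<^sup>2))"
  have qs0: "qs > 0" unfolding qs_def using l\<beta> \<beta>1 sz by auto
  have "(\<lambda>n. (x n / sqrt (real n))^2) \<longlonglongrightarrow> 0^2" by (rule tendsto_power[OF condIV(2)])
  then have ev3: "eventually (\<lambda>n. (x n / sqrt (real n))^2 < qs) sequentially"
    using qs0 by (intro order_tendstoD(2)) auto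
  have ev2: "eventually (\<lambda>n. 3 \<le> x n) sequentially"
    using condIV(1) by (simp add: filterlim_at_top)
  have ev1: "eventually (\<lambda>n. (1::nat) \<le> n) sequentially" by (rule eventually_ge_at_top)
  have ev: "eventually (\<lambda>n.
      capV H E {w. (\<Sum>i=1..n. Xs i w) \<ge> x n * sqrt (\<Sum>i=1..n. (Xs i w)\<^sup>2) \<and>
                   (\<Sum>i=1..n. (Xs i w)\<^sup>2) \<ge> 9 * real n * l (z n)}
      \<le> ereal (exp (- (x n)\<^sup>2 + 0 * (x n)\<^sup>2))) sequentially"
    using ev1 ev2 ev3
  proof eventually_elim
    case (elim n)
    have n: "n \<ge> 1" and xn: "3 \<le> x n" and qn: "(x n / sqrt (real n))^2 < qs" using elim by auto
    define q where "q = (x n)\<^sup>2 / real n"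
    have qeq: "(x n / sqrt (real n))^2 = q" unfolding q_def using n by (simp add: power_divide)
    have q0: "q > 0" unfolding q_def using xn n by simp
    have q1: "q \<le> l \<beta> / \<beta>\<^sup>2" "q \<le> l \<beta> / (4 * (200 * sz)\<^sup>2)" using qn qeq unfolding qs_def by auto
    have lmono: "\<And>s t. 0 \<le> s \<Longrightarrow> s \<le> t \<Longrightarrow> l s \<le> l t" by (intro l_mono) auto
    have zd: "z n = Inf {s. s \<ge> \<beta> \<and> l s / s\<^sup>2 \<le> q}" unfolding \<beta>_def q_def by (rule z_def)
    note zf = z_facts[OF lmono lE(2) lM M0 \<beta>1 q0 q1(1) zd]
    have zpos: "z n > 0" using zf(1) \<beta>1 by simp
    have lzpos: "l (z n) > 0" using zf(4) l\<beta> by simp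
    have zs: "z n / 100 / 2 \<ge> sz"
    proof -
      have "(200 * sz)\<^sup>2 * (4 * q) \<le> l \<beta>" using q1(2) sz by (simp add: field_simps)
      also have "\<dots> \<le> l (z n)" by (rule zf(4))
      also have "\<dots> \<le> (z n)\<^sup>2 * (4 * q)" using zf(3) zpos by (simp add: field_simps)
      finally have "(200 * sz)\<^sup>2 * (4 * q) \<le> (z n)\<^sup>2 * (4 * q)" .
      moreover have "0 < 4 * q" using q0 by simp
      ultimately have "(200 * sz)\<^sup>2 \<le> (z n)\<^sup>2" by (rule mult_right_le_imp_le)
      then have "200 * sz \<le> z n" using power2_le_imp_le[OF _ less_imp_le[OF zpos]] by blast
      then show ?thesis by simp
    qed
    have "capV H E {w. (\<Sum>i=1..n. Xs i w) \<ge> x n * sqrt (\<Sum>i=1..n. (Xs i w)\<^sup>2) \<and>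
                   (\<Sum>i=1..n. (Xs i w)\<^sup>2) \<ge> 9 * real n * l (z n)} \<le> ereal (exp (- (x n)\<^sup>2))"
      by (rule main_n[OF XsH indep ident cap \<eta>_def Dlim n xn zpos lzpos _ _ zs sz])
         (use zf(2,3) in \<open>simp_all add: q_def\<close>)
    then show ?case by simp
  qed
  show ?thesis
    by (rule exI[of _ "\<lambda>n. 0"]) (use ev in simp)
qed


end
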